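(* Let $d\ge2$, $t\ge 0$, and let $\Phi_t:\mathbb M_d\to\mathbb M_d$, $\Phi_t(X)=\mathrm{Tr}(X)I_d-tX$. Fix $\alpha\in[1,d]$ and write $k:=\lfloor\alpha\rfloor$, $\theta:=\alpha-k\in[0,1)$. Then $$\Phi_t\in\mathsf P_\alpha\iff t\le t^\ast_\alpha:=\frac{k+\theta^2}{(k+\theta)^2},$$ and in fact $\lambda_\alpha(C_{\Phi_t})=1-t\frac{(k+\theta)^2}{k+\theta^2}$. Moreover the threshold is sharp: if $t>t^\ast_\alpha$ there exists $x\in\mathcal V_\alpha$ with $\langle x,C_{\Phi_t}x\rangle<0$; if $\alpha\in(k,k+1)$ one may take $x$ with Schmidt coefficients $\frac{1}{\sqrt{k+\theta^2}}$ ($k$ times), $\frac{\theta}{\sqrt{k+\theta^2}}$, and $0$ otherwise; if $\alpha=d$ one may take $x=\omega:=\frac1{\sqrt d}\sum_{i=1}^de_i\otimes e_i$.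
   Context: Here $n=m=d$. The Choi matrix of a linear $\Phi:\mathbb M_d\to\mathbb M_d$ is $C_\Phi=\sum_{i,j}E_{ij}\otimes\Phi(E_{ij})$ (matrix units $E_{ij}$; one has $C_{\Phi_t}=I\otimes I-td\,\omega\omega^\ast$). Schmidt coefficients $s_1(\psi)\ge\dots\ge s_d(\psi)\ge0$ of $\psi=\sum a_{ij}e_i\otimes e_j$ are the singular values of $[a_{ij}]$. For $\alpha\in[1,d]$ with $k=\lfloor\alpha\rfloor$, $\theta=\alpha-k$, $r=\lceil\alpha\rceil$, a unit vector $\psi$ is $\alpha$-admissible if $s_j(\psi)=0$ for $j\ge r+1$ and, when $\theta>0$, $s_{k+1}(\psi)\le\frac\theta k\sum_{j=1}^ks_j(\psi)$; $\mathcal V_\alpha$ is the set of these. For Hermitian $W$, $\lambda_\alpha(W):=\min\{\langle x,Wx\rangle:x\in\mathcal V_\alpha\}$. A Hermitian-preserving $\Phi$ is in $\mathsf P_\alpha$ if $\langle\psi,C_\Phi\psi\rangle\ge0$ for all $\psi\in\mathcal V_\alpha$ (equivalently $\lambda_\alpha(C_\Phi)\ge0$). *)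

theory Defs
  imports "HOL-Analysis.Analysis"
begin

text \<open>A d x d complex matrix is a function nat => nat => complex, only the
 entries with indices < d matter (indices 0..d-1 stand for 1..d).  A vector
 psi = sum a_ij e_i (x) e_j of C^d (x) C^d is represented by its coefficient matrix a.\<close>

type_synonym cmat = "nat \<Rightarrow> nat \<Rightarrow> complex"

definition unitary_mat :: "nat \<Rightarrow> cmat \<Rightarrow> bool" where
  "unitary_mat d U \<longleftrightarrow>
     (\<forall>i<d. \<forall>j<d. (\<Sum>m<d. U i m * cnj (U j m)) = (if i = j then 1 else 0))"

definition is_singular_values :: "nat \<Rightarrow> cmat \<Rightarrow> (nat \<Rightarrow> real) \<Rightarrow> bool" where
  "is_singular_values d a s \<longleftrightarrow>
     (\<forall>j. 0 \<le> s j) \<and> (\<forall>j. d \<le> j \<longrightarrow> s j = 0) \<and>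
     (\<forall>i j. i \<le> j \<longrightarrow> j < d \<longrightarrow> s j \<le> s i) \<and>
     (\<exists>U V. unitary_mat d U \<and> unitary_mat d V \<and>
        (\<forall>i<d. \<forall>p<d. a i p = (\<Sum>m<d. U i m * complex_of_real (s m) * cnj (V p m))))"

text \<open>Schmidt coefficients s_1 >= ... >= s_d of psi: schmidt d a j is s_(j+1).\<close>
definition schmidt :: "nat \<Rightarrow> cmat \<Rightarrow> nat \<Rightarrow> real" where
  "schmidt d a = (SOME s. is_singular_values d a s)"

definition unit_vec :: "nat \<Rightarrow> cmat \<Rightarrow> bool" where
  "unit_vec d a \<longleftrightarrow> (\<Sum>i<d. \<Sum>p<d. (cmod (a i p))\<^sup>2) = 1"

definition admissible :: "nat \<Rightarrow> real \<Rightarrow> cmat \<Rightarrow> bool" where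
  "admissible d \<alpha> a \<longleftrightarrow>
     (let k = nat \<lfloor>\<alpha>\<rfloor>; \<theta> = \<alpha> - real k; r = nat \<lceil>\<alpha>\<rceil> in
       unit_vec d a \<and>
       (\<forall>j. r \<le> j \<longrightarrow> schmidt d a j = 0) \<and>
       (\<theta> > 0 \<longrightarrow> schmidt d a k \<le> \<theta> / real k * (\<Sum>j<k. schmidt d a j)))"

definition V_set :: "nat \<Rightarrow> real \<Rightarrow> cmat set" where
  "V_set d \<alpha> = {a. admissible d \<alpha> a}"

text \<open>Matrix units E_ij and Choi matrix C_Phi = sum E_ij (x) Phi(E_ij); the entry of C_Phi
 in row e_i (x) e_p and column e_j (x) e_q is Phi(E_ij)_pq.\<close>
definition mat_unit :: "nat \<Rightarrow> nat \<Rightarrow> cmat" where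
  "mat_unit i j = (\<lambda>a b. if a = i \<and> b = j then 1 else 0)"

definition choi :: "(cmat \<Rightarrow> cmat) \<Rightarrow> nat \<times> nat \<Rightarrow> nat \<times> nat \<Rightarrow> complex" where
  "choi \<Phi> = (\<lambda>(i, p) (j, q). \<Phi> (mat_unit i j) p q)"

definition qform :: "nat \<Rightarrow> (nat \<times> nat \<Rightarrow> nat \<times> nat \<Rightarrow> complex) \<Rightarrow> cmat \<Rightarrow> complex" where
  "qform d W x = (\<Sum>i<d. \<Sum>p<d. \<Sum>j<d. \<Sum>q<d. cnj (x i p) * W (i, p) (j, q) * x j q)"

definition lambda_alpha :: "nat \<Rightarrow> real \<Rightarrow> (nat \<times> nat \<Rightarrow> nat \<times> nat \<Rightarrow> complex) \<Rightarrow> real" where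
  "lambda_alpha d \<alpha> W = Inf ((\<lambda>x. Re (qform d W x)) ` V_set d \<alpha>)"

definition hermitian_mat :: "nat \<Rightarrow> cmat \<Rightarrow> bool" where
  "hermitian_mat d X \<longleftrightarrow> (\<forall>i<d. \<forall>j<d. X j i = cnj (X i j))"

definition hermitian_preserving :: "nat \<Rightarrow> (cmat \<Rightarrow> cmat) \<Rightarrow> bool" where
  "hermitian_preserving d \<Phi> \<longleftrightarrow> (\<forall>X. hermitian_mat d X \<longrightarrow> hermitian_mat d (\<Phi> X))"

text \<open>The quadratic form is real for Hermitian-preserving maps (Choi matrix Hermitian).\<close>
definition in_P :: "nat \<Rightarrow> real \<Rightarrow> (cmat \<Rightarrow> cmat) \<Rightarrow> bool" where
  "in_P d \<alpha> \<Phi> \<longleftrightarrow> hermitian_preserving d \<Phi> \<and>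
     (\<forall>\<psi>\<in>V_set d \<alpha>. 0 \<le> Re (qform d (choi \<Phi>) \<psi>))"

definition mtrace :: "nat \<Rightarrow> cmat \<Rightarrow> complex" where
  "mtrace d X = (\<Sum>i<d. X i i)"

definition Phi_t :: "nat \<Rightarrow> real \<Rightarrow> cmat \<Rightarrow> cmat" where
  "Phi_t d t X = (\<lambda>i j. (if i = j then mtrace d X else 0) - complex_of_real t * X i j)"

definition omega :: "nat \<Rightarrow> cmat" where
  "omega d = (\<lambda>i j. if i = j then complex_of_real (1 / sqrt (real d)) else 0)"

end

theory Submission
  imports Defs "Jordan_Normal_Form.Determinant" "Jordan_Normal_Form.Char_Poly" "Jordan_Normal_Form.Spectral_Radius" "HOL-Combinatorics.List_Permutation"
begin

definition cmm :: "nat \<Rightarrow> cmat \<Rightarrow> cmat \<Rightarrow> cmat" where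
  "cmm n A B = (\<lambda>i j. \<Sum>m<n. A i m * B m j)"

definition tomat :: "nat \<Rightarrow> cmat \<Rightarrow> complex mat" where
  "tomat n A = mat n n (\<lambda>(i,j). A i j)"

lemma tomat_carrier[simp]: "tomat n A \<in> carrier_mat n n"
  by (simp add: tomat_def)

lemma tomat_index[simp]: "i < n \<Longrightarrow> j < n \<Longrightarrow> tomat n A $$ (i,j) = A i j"
  by (simp add: tomat_def)

lemma tomat_mult: "tomat n A * tomat n B = tomat n (cmm n A B)"
proof (rule eq_matI)
  fix i j assume "i < dim_row (tomat n (cmm n A B))" "j < dim_col (tomat n (cmm n A B))"
  then have ij: "i < n" "j < n" by (auto simp: tomat_def)
  have "(tomat n A * tomat n B) $$ (i,j) = row (tomat n A) i \<bullet> col (tomat n B) j"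
    using ij by (simp add: tomat_def)
  also have "\<dots> = (\<Sum>m<n. A i m * B m j)"
    using ij by (simp add: scalar_prod_def atLeast0LessThan tomat_def)
  finally show "(tomat n A * tomat n B) $$ (i,j) = tomat n (cmm n A B) $$ (i,j)"
    using ij by (simp add: cmm_def)
qed (auto simp: tomat_def)

lemma left_right_inv:
  fixes n :: nat and A B :: cmat
  assumes "\<forall>i<n. \<forall>j<n. (\<Sum>m<n. A i m * B m j) = (if i = j then 1 else 0)"
  shows "\<forall>i<n. \<forall>j<n. (\<Sum>m<n. B i m * A m j) = (if i = j then 1 else 0)"
proof -
  have "tomat n (cmm n A B) = 1\<^sub>m n"
    by (rule eq_matI) (use assms in \<open>auto simp: tomat_def cmm_def\<close>)
  then have "tomat n A * tomat n B = 1\<^sub>m n" by (simp add: tomat_mult)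
  then have "tomat n B * tomat n A = 1\<^sub>m n"
    using mat_mult_left_right_inverse[of "tomat n A" n "tomat n B"] by simp
  then have e: "tomat n (cmm n B A) = 1\<^sub>m n" by (simp add: tomat_mult)
  show ?thesis
  proof (intro allI impI)
    fix i j assume ij: "i < n" "j < n"
    have "tomat n (cmm n B A) $$ (i,j) = 1\<^sub>m n $$ (i,j)" using e by simp
    then show "(\<Sum>m<n. B i m * A m j) = (if i = j then 1 else 0)" using ij by (simp add: cmm_def)
  qed
qed

lemma exists_eigen:
  fixes n :: nat and H :: cmat
  assumes "0 < n"
  shows "\<exists>e v. (\<exists>i<n. v i \<noteq> 0) \<and> (\<forall>i<n. (\<Sum>j<n. H i j * v j) = e * v i)"
proof -
  obtain e where "e \<in> spectrum (tomat n H)" using spectrum_non_empty[of "tomat n H" n] assms by auto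
  then obtain v where v: "v \<in> carrier_vec n" "v \<noteq> 0\<^sub>v n" "tomat n H *\<^sub>v v = e \<cdot>\<^sub>v v"
    unfolding spectrum_def eigenvalue_def eigenvector_def by (auto simp: tomat_def)
  have nz: "\<exists>i<n. v $ i \<noteq> 0"
  proof (rule ccontr)
    assume "\<not> ?thesis"
    then have "v = 0\<^sub>v n" using v(1) by (intro eq_vecI) auto
    then show False using v(2) by simp
  qed
  have "\<forall>i<n. (\<Sum>j<n. H i j * v $ j) = e * v $ i"
  proof (intro allI impI)
    fix i assume i: "i < n"
    have "(tomat n H *\<^sub>v v) $ i = (e \<cdot>\<^sub>v v) $ i" using v(3) by simp
    then show "(\<Sum>j<n. H i j * v $ j) = e * v $ i"
      using i v(1) by (simp add: mult_mat_vec_def scalar_prod_def atLeast0LessThan tomat_def)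
  qed
  then show ?thesis using nz by (intro exI[of _ e] exI[of _ "\<lambda>i. v $ i"]) auto
qed

lemma exists_left_kernel:
  fixes n :: nat and A :: cmat and v :: "nat \<Rightarrow> complex"
  assumes "\<exists>i<n. v i \<noteq> 0" "\<forall>i<n. (\<Sum>j<n. A i j * v j) = 0"
  shows "\<exists>w. (\<exists>i<n. w i \<noteq> 0) \<and> (\<forall>j<n. (\<Sum>i<n. w i * A i j) = 0)"
proof -
  let ?v = "vec n v"
  have "?v \<noteq> 0\<^sub>v n" using assms(1) by (auto simp: vec_eq_iff)
  moreover have "tomat n A *\<^sub>v ?v = 0\<^sub>v n"
    using assms(2) by (intro eq_vecI) (auto simp: mult_mat_vec_def scalar_prod_def atLeast0LessThan tomat_def)
  moreover have "?v \<in> carrier_vec n" by simp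
  ultimately have "det (tomat n A) = 0"
    using det_0_iff_vec_prod_zero[of "tomat n A" n] tomat_carrier by blast
  then have "det (transpose_mat (tomat n A)) = 0" by (simp add: det_transpose[of _ n])
  then obtain w where w: "w \<in> carrier_vec n" "w \<noteq> 0\<^sub>v n" "transpose_mat (tomat n A) *\<^sub>v w = 0\<^sub>v n"
    using det_0_iff_vec_prod_zero[of "transpose_mat (tomat n A)" n] by auto
  have nz: "\<exists>i<n. w $ i \<noteq> 0"
  proof (rule ccontr)
    assume "\<not> ?thesis"
    then have "w = 0\<^sub>v n" using w(1) by (intro eq_vecI) auto
    then show False using w(2) by simp
  qed
  have "\<forall>j<n. (\<Sum>i<n. w $ i * A i j) = 0"
  proof (intro allI impI)
    fix j assume j: "j < n"
    have "(transpose_mat (tomat n A) *\<^sub>v w) $ j = 0" using w(3) j by simp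
    then show "(\<Sum>i<n. w $ i * A i j) = 0"
      using j w(1) by (simp add: mult_mat_vec_def scalar_prod_def atLeast0LessThan tomat_def mult.commute)
  qed
  then show ?thesis using nz by (intro exI[of _ "\<lambda>i. w $ i"]) auto
qed

definition cadj :: "cmat \<Rightarrow> cmat" where
  "cadj A = (\<lambda>i j. cnj (A j i))"

definition cdiag :: "(nat \<Rightarrow> complex) \<Rightarrow> cmat" where
  "cdiag s = (\<lambda>i j. if i = j then s i else 0)"

definition isid :: "nat \<Rightarrow> cmat \<Rightarrow> bool" where
  "isid n M \<longleftrightarrow> (\<forall>i<n. \<forall>j<n. M i j = (if i = j then 1 else 0))"

lemma cmm_assoc: "cmm n (cmm n A B) C = cmm n A (cmm n B C)"
  unfolding cmm_def
  by (auto simp: sum_distrib_left sum_distrib_right mult.assoc intro!: ext sum.swap)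

lemma cadj_cmm: "cadj (cmm n A B) = cmm n (cadj B) (cadj A)"
  unfolding cmm_def cadj_def by (auto simp: mult.commute intro!: ext)

lemma cadj_cadj[simp]: "cadj (cadj A) = A"
  unfolding cadj_def by auto

lemma cmm_isid_left: "isid n M \<Longrightarrow> i < n \<Longrightarrow> j < n \<Longrightarrow> cmm n M B i j = B i j"
proof -
  assume a: "isid n M" "i < n" "j < n"
  have "cmm n M B i j = (\<Sum>m<n. if m = i then B m j else 0)"
    unfolding cmm_def by (rule sum.cong) (use a in \<open>auto simp: isid_def\<close>)
  then show ?thesis using a by simp
qed

lemma cmm_isid_right: "isid n M \<Longrightarrow> i < n \<Longrightarrow> j < n \<Longrightarrow> cmm n B M i j = B i j"
proof -
  assume a: "isid n M" "i < n" "j < n"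
  have "cmm n B M i j = (\<Sum>m<n. if m = j then B i m else 0)"
    unfolding cmm_def by (rule sum.cong) (use a in \<open>auto simp: isid_def\<close>)
  then show ?thesis using a by simp
qed

lemma cmm_cong: "(\<And>i m. i < n \<Longrightarrow> m < n \<Longrightarrow> A i m = A' i m) \<Longrightarrow> (\<And>m j. m < n \<Longrightarrow> j < n \<Longrightarrow> B m j = B' m j)
   \<Longrightarrow> i < n \<Longrightarrow> j < n \<Longrightarrow> cmm n A B i j = cmm n A' B' i j"
  unfolding cmm_def by (auto intro!: sum.cong)

lemma unitary_isid: "unitary_mat n U \<longleftrightarrow> isid n (cmm n U (cadj U))"
  unfolding unitary_mat_def isid_def cmm_def cadj_def by simp

lemma unitary_isid2: "unitary_mat n U \<Longrightarrow> isid n (cmm n (cadj U) U)"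
  unfolding unitary_mat_def isid_def cmm_def cadj_def
  using left_right_inv[of n U "\<lambda>i j. cnj (U j i)"] by simp

lemma cmm_diag: "cmm n (cmm n U (cdiag s)) V i p = (\<Sum>m<n. U i m * s m * V m p)"
  unfolding cmm_def cdiag_def by (simp add: if_distrib if_distribR cong: if_cong)

lemma phase_facts:
  fixes z :: complex
  defines "\<phi> \<equiv> (if z = 0 then -1 else - z / of_real (cmod z))"
  shows "\<phi> * cnj \<phi> = 1" "cnj \<phi> * z = - of_real (cmod z)" "\<phi> * cnj z = - of_real (cmod z)"
proof -
  have nsq: "z * cnj z = of_real ((cmod z)^2)" by (metis complex_norm_square)
  show "\<phi> * cnj \<phi> = 1"
  proof (cases "z = 0")
    case False
    then have "cmod z \<noteq> 0" by simp
    then show ?thesis using False nsq by (simp add: \<phi>_def field_simps power2_eq_square)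
  qed (simp add: \<phi>_def)
  show "cnj \<phi> * z = - of_real (cmod z)"
  proof (cases "z = 0")
    case False
    then have "cmod z \<noteq> 0" by simp
    then show ?thesis using False nsq by (simp add: \<phi>_def field_simps power2_eq_square mult.commute)
  qed (simp add: \<phi>_def)
  show "\<phi> * cnj z = - of_real (cmod z)"
  proof (cases "z = 0")
    case False
    then have "cmod z \<noteq> 0" by simp
    then show ?thesis using False nsq by (simp add: \<phi>_def field_simps power2_eq_square mult.commute)
  qed (simp add: \<phi>_def)
qed

lemma exists_unitary_lastcol:
  fixes n :: nat and u :: "nat \<Rightarrow> complex"
  assumes unit: "(\<Sum>i<Suc n. u i * cnj (u i)) = 1"
  shows "\<exists>X. unitary_mat (Suc n) X \<and> (\<forall>i<Suc n. X i n = u i)"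
proof -
  define \<phi> where "\<phi> = (if u n = 0 then -1 else - u n / of_real (cmod (u n)))"
  note ph = phase_facts[of "u n", folded \<phi>_def]
  define r where "r = (of_real (cmod (u n)) :: complex)"
  define w where "w i = u i - (if i = n then \<phi> else 0)" for i
  define c where "c = (\<Sum>i<Suc n. w i * cnj (w i))"
  have s1: "(\<Sum>i<n. u i * cnj (u i)) = 1 - u n * cnj (u n)"
  proof -
    have "(\<Sum>i<n. u i * cnj (u i)) + u n * cnj (u n) = 1" using unit by simp
    then show ?thesis by (simp add: eq_diff_eq)
  qed
  have s2: "(\<Sum>i<n. w i * cnj (w i)) = (\<Sum>i<n. u i * cnj (u i))"
    by (rule sum.cong) (auto simp: w_def)
  have "c = (\<Sum>i<n. w i * cnj (w i)) + w n * cnj (w n)" by (simp add: c_def)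
  also have "w n * cnj (w n) = u n * cnj (u n) - cnj (\<phi> * cnj (u n)) - \<phi> * cnj (u n) + \<phi> * cnj \<phi>"
    by (simp add: w_def algebra_simps)
  finally have c_eq: "c = 2 + 2 * r"
    using s1 s2 ph by (simp add: r_def)
  have r_real: "cnj r = r" "0 \<le> Re r" "Im r = 0" by (simp_all add: r_def)
  have c0: "c \<noteq> 0"
  proof
    assume "c = 0"
    then have "Re c = 0" by simp
    then show False using c_eq r_real by simp
  qed
  have cc: "cnj c = c" using c_eq r_real by simp
  define H where "H i j = (if i = j then 1 else 0) - 2 * w i * cnj (w j) / c" for i j
  define X where "X i j = H i j * (if j = n then \<phi> else 1)" for i j
  have cnjH: "cnj (H i j) = (if i = j then 1 else 0) - 2 * cnj (w i) * w j / c" for i j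
    using cc by (simp add: H_def)
  have HH: "(\<Sum>m<Suc n. H i m * cnj (H j m)) = (if i = j then 1 else 0)" if ij: "i < Suc n" "j < Suc n" for i j
  proof -
    have "(\<Sum>m<Suc n. H i m * cnj (H j m)) = (\<Sum>m<Suc n.
        (if i = m then 1 else 0) * (if j = m then 1 else 0)
      - (if i = m then 2 * cnj (w j) * w m / c else 0)
      - (if j = m then 2 * w i * cnj (w m) / c else 0)
      + (4 * w i * cnj (w j) / (c * c)) * (w m * cnj (w m)))"
      unfolding cnjH by (rule sum.cong) (auto simp: H_def algebra_simps)
    also have "\<dots> = (if i = j then 1 else 0) - 2 * cnj (w j) * w i / c - 2 * w i * cnj (w j) / c
       + (4 * w i * cnj (w j) / (c * c)) * c"
    proof -
      have e1: "(\<Sum>m<Suc n. (if i = m then 1 else 0) * (if j = m then 1 else 0)) = (if i = j then 1 else (0::complex))"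
      proof -
        have "(\<Sum>m<Suc n. (if i = m then 1 else 0) * (if j = m then 1 else 0)) = (\<Sum>m<Suc n. if i = m then (if j = i then 1 else 0) else (0::complex))"
          by (rule sum.cong) auto
        then show ?thesis using ij by (simp add: sum.delta')
      qed
      have e2: "(\<Sum>m<Suc n. if i = m then 2 * cnj (w j) * w m / c else 0) = 2 * cnj (w j) * w i / c"
        using ij by (simp add: sum.delta')
      have e3: "(\<Sum>m<Suc n. if j = m then 2 * w i * cnj (w m) / c else 0) = 2 * w i * cnj (w j) / c"
        using ij by (simp add: sum.delta')
      have e4: "(\<Sum>m<Suc n. (4 * w i * cnj (w j) / (c * c)) * (w m * cnj (w m))) = (4 * w i * cnj (w j) / (c * c)) * c"
      proof -
        have "(\<Sum>m<Suc n. (4 * w i * cnj (w j) / (c * c)) * (w m * cnj (w m))) = (4 * w i * cnj (w j) / (c * c)) * (\<Sum>m<Suc n. w m * cnj (w m))"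
          by (simp only: sum_distrib_left)
        then show ?thesis by (simp only: c_def[symmetric])
      qed
      show ?thesis by (simp only: sum.distrib sum_subtractf e1 e2 e3 e4)
    qed
    also have "\<dots> = (if i = j then 1 else 0)" using c0 by (simp add: field_simps)
    finally show ?thesis .
  qed
  have "unitary_mat (Suc n) X"
    unfolding unitary_mat_def
  proof (intro allI impI)
    fix i j assume ij: "i < Suc n" "j < Suc n"
    have "(\<Sum>m<Suc n. X i m * cnj (X j m)) = (\<Sum>m<Suc n. H i m * cnj (H j m))"
    proof (rule sum.cong)
      fix m show "X i m * cnj (X j m) = H i m * cnj (H j m)"
        using ph(1) by (cases "m = n") (auto simp: X_def algebra_simps)
    qed simp
    then show "(\<Sum>m<Suc n. X i m * cnj (X j m)) = (if i = j then 1 else 0)" using HH ij by simp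
  qed
  moreover have "X i n = u i" if i: "i < Suc n" for i
  proof -
    have wn: "cnj (w n) * \<phi> = - r - 1"
      using ph by (simp add: w_def r_def algebra_simps) 
    have "X i n = (if i = n then \<phi> else 0) - 2 * w i * (cnj (w n) * \<phi>) / c"
      by (simp add: X_def H_def algebra_simps)
    also have "\<dots> = (if i = n then \<phi> else 0) + w i * (2 + 2 * r) / c"
      unfolding wn using c0 by (simp add: field_simps)
    also have "\<dots> = u i" using c0 by (simp add: c_eq[symmetric] w_def)
    finally show ?thesis .
  qed
  ultimately show ?thesis by blast
qed

lemma sum_sq_real: fixes n :: nat shows "(\<Sum>i<n. f i * cnj (f i)) = of_real (\<Sum>i<n. (cmod (f i))^2)"
  by (simp only: of_real_sum complex_norm_square)

lemma sum_sq_zero: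
  fixes n :: nat
  assumes "(\<Sum>i<n. f i * cnj (f i)) = 0" "i < n" shows "f i = 0"
proof -
  have "(\<Sum>i<n. (cmod (f i))^2) = 0" using assms(1) unfolding sum_sq_real by (metis of_real_eq_0_iff)
  moreover have fin: "finite {..<n}" by simp
  ultimately have "\<forall>i\<in>{..<n}. (cmod (f i))^2 = 0" using sum_nonneg_eq_0_iff[OF fin, of "\<lambda>i. (cmod (f i))^2"] by simp
  then show ?thesis using assms(2) by simp
qed

lemma normalize_vec:
  fixes n :: nat and f :: "nat \<Rightarrow> complex"
  assumes "\<exists>i<n. f i \<noteq> 0"
  shows "\<exists>c>0. (\<Sum>i<n. (f i / of_real c) * cnj (f i / of_real c)) = 1 \<and> (\<Sum>i<n. f i * cnj (f i)) = of_real (c^2)"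
proof -
  define N where "N = (\<Sum>i<n. (cmod (f i))^2)"
  obtain i where i: "i < n" "f i \<noteq> 0" using assms by auto
  have "N > 0" unfolding N_def
    by (rule sum_pos2[of _ i]) (use i in auto)
  define c where "c = sqrt N"
  have c: "c > 0" "c^2 = N" using \<open>N > 0\<close> by (auto simp: c_def)
  have fN: "(\<Sum>i<n. f i * cnj (f i)) = of_real N" unfolding N_def by (rule sum_sq_real)
  have "(\<Sum>i<n. (f i / of_real c) * cnj (f i / of_real c)) = (\<Sum>i<n. f i * cnj (f i)) / of_real (c^2)"
    by (simp add: sum_divide_distrib power2_eq_square)
  also have "\<dots> = 1" using c \<open>N > 0\<close> unfolding fN by simp
  finally show ?thesis using c fN by auto
qed

lemma quad_identity:
  fixes n :: nat and A :: cmat and v :: "nat \<Rightarrow> complex"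
  shows "(\<Sum>k<n. (\<Sum>j<n. A k j * v j) * cnj (\<Sum>i<n. A k i * v i))
       = (\<Sum>i<n. cnj (v i) * (\<Sum>j<n. (\<Sum>k<n. cnj (A k i) * A k j) * v j))"
proof -
  have "(\<Sum>k<n. (\<Sum>j<n. A k j * v j) * cnj (\<Sum>i<n. A k i * v i))
      = (\<Sum>k<n. \<Sum>j<n. \<Sum>i<n. (A k j * v j) * (cnj (A k i) * cnj (v i)))"
    by (simp only: cnj_sum complex_cnj_mult sum_product)
  also have "\<dots> = (\<Sum>k<n. \<Sum>i<n. \<Sum>j<n. (A k j * v j) * (cnj (A k i) * cnj (v i)))"
    by (rule sum.cong[OF refl], rule sum.swap)
  also have "\<dots> = (\<Sum>i<n. \<Sum>k<n. \<Sum>j<n. (A k j * v j) * (cnj (A k i) * cnj (v i)))"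
    by (rule sum.swap)
  also have "\<dots> = (\<Sum>i<n. \<Sum>j<n. \<Sum>k<n. (A k j * v j) * (cnj (A k i) * cnj (v i)))"
    by (rule sum.cong[OF refl], rule sum.swap)
  also have "\<dots> = (\<Sum>i<n. \<Sum>j<n. \<Sum>k<n. cnj (v i) * ((cnj (A k i) * A k j) * v j))"
    by (intro sum.cong refl) (simp only: mult_ac)
  also have "\<dots> = (\<Sum>i<n. cnj (v i) * (\<Sum>j<n. (\<Sum>k<n. cnj (A k i) * A k j) * v j))"
    by (simp only: sum_distrib_left sum_distrib_right)
  finally show ?thesis .
qed

lemma adj_identity:
  fixes n :: nat and A :: cmat and v :: "nat \<Rightarrow> complex"
  shows "(\<Sum>k<n. cnj (A k p) * (\<Sum>j<n. A k j * v j)) = (\<Sum>j<n. (\<Sum>k<n. cnj (A k p) * A k j) * v j)"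
proof -
  have "(\<Sum>k<n. cnj (A k p) * (\<Sum>j<n. A k j * v j)) = (\<Sum>k<n. \<Sum>j<n. cnj (A k p) * (A k j * v j))"
    by (simp only: sum_distrib_left)
  also have "\<dots> = (\<Sum>j<n. \<Sum>k<n. cnj (A k p) * (A k j * v j))" by (rule sum.swap)
  also have "\<dots> = (\<Sum>j<n. (\<Sum>k<n. cnj (A k p) * A k j) * v j)"
    by (simp only: sum_distrib_right mult.assoc)
  finally show ?thesis .
qed

lemma exists_sv_pair:
  fixes n :: nat and A :: cmat
  assumes n: "0 < n"
  shows "\<exists>\<sigma> u v. 0 \<le> \<sigma> \<and> (\<Sum>i<n. u i * cnj (u i)) = 1 \<and> (\<Sum>i<n. v i * cnj (v i)) = 1 \<and>
     (\<forall>i<n. (\<Sum>p<n. A i p * v p) = of_real \<sigma> * u i) \<and> (\<forall>p<n. (\<Sum>i<n. cnj (A i p) * u i) = of_real \<sigma> * v p)"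
proof -
  define H where "H i j = (\<Sum>k<n. cnj (A k i) * A k j)" for i j
  obtain e v0 where nz: "\<exists>i<n. v0 i \<noteq> 0" and ev: "\<forall>i<n. (\<Sum>j<n. H i j * v0 j) = e * v0 i"
    using exists_eigen[OF n, of H] by blast
  define y where "y k = (\<Sum>j<n. A k j * v0 j)" for k
  obtain a where a: "a > 0" "(\<Sum>i<n. (v0 i / of_real a) * cnj (v0 i / of_real a)) = 1"
      "(\<Sum>i<n. v0 i * cnj (v0 i)) = of_real (a^2)"
    using normalize_vec[OF nz] by blast
  define v where "v i = v0 i / of_real a" for i
  have Aty: "(\<Sum>k<n. cnj (A k p) * y k) = e * v0 p" if "p < n" for p
    using adj_identity[where n=n and A=A and p=p and v=v0] ev that by (simp add: y_def H_def)
  have ny: "(\<Sum>k<n. y k * cnj (y k)) = e * of_real (a^2)"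
  proof -
    have "(\<Sum>k<n. y k * cnj (y k)) = (\<Sum>i<n. cnj (v0 i) * (\<Sum>j<n. H i j * v0 j))"
      unfolding y_def H_def by (rule quad_identity)
    also have "\<dots> = (\<Sum>i<n. cnj (v0 i) * (e * v0 i))" using ev by (intro sum.cong) auto
    also have "\<dots> = e * (\<Sum>i<n. v0 i * cnj (v0 i))" by (simp add: sum_distrib_left algebra_simps)
    finally show ?thesis using a(3) by simp
  qed
  have Av: "(\<Sum>p<n. A i p * v p) = y i / of_real a" for i
    by (simp add: v_def y_def sum_divide_distrib)
  show ?thesis
  proof (cases "\<exists>k<n. y k \<noteq> 0")
    case True
    obtain b where b: "b > 0" "(\<Sum>i<n. (y i / of_real b) * cnj (y i / of_real b)) = 1"
        "(\<Sum>i<n. y i * cnj (y i)) = of_real (b^2)"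
      using normalize_vec[OF True] by blast
    have "e * of_real (a^2) = of_real (b^2)" using ny b(3) by simp
    then have e: "e = of_real (b^2 / a^2)" using a(1) by (simp add: field_simps)
    define \<sigma> where "\<sigma> = b / a"
    define u where "u i = y i / of_real b" for i
    show ?thesis
    proof (intro exI conjI allI impI)
      show "0 \<le> \<sigma>" using a b by (simp add: \<sigma>_def)
      show "(\<Sum>i<n. u i * cnj (u i)) = 1" using b(2) by (simp add: u_def)
      show "(\<Sum>i<n. v i * cnj (v i)) = 1" using a(2) by (simp add: v_def)
    next
      fix i assume "i < n"
      show "(\<Sum>p<n. A i p * v p) = of_real \<sigma> * u i"
        unfolding Av using a b by (simp add: u_def \<sigma>_def field_simps)
    next
      fix p assume p: "p < n"
      have "(\<Sum>i<n. cnj (A i p) * u i) = (\<Sum>k<n. cnj (A k p) * y k) / of_real b"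
        by (simp add: u_def sum_divide_distrib)
      also have "\<dots> = e * v0 p / of_real b" using Aty[OF p] by simp
      also have "\<dots> = of_real \<sigma> * v p"
        using a b by (simp add: e v_def \<sigma>_def field_simps power2_eq_square)
      finally show "(\<Sum>i<n. cnj (A i p) * u i) = of_real \<sigma> * v p" .
    qed
  next
    case False
    then have y0: "\<forall>k<n. y k = 0" by auto
    obtain w where w: "\<exists>i<n. w i \<noteq> 0" "\<forall>j<n. (\<Sum>i<n. w i * A i j) = 0"
      using exists_left_kernel[of n v0 A] nz y0 by (auto simp: y_def)
    obtain c where c: "c > 0" "(\<Sum>i<n. (w i / of_real c) * cnj (w i / of_real c)) = 1"
      using normalize_vec[OF w(1)] by blast
    define u where "u i = cnj (w i) / of_real c" for i
    have g1: "(\<Sum>i<n. u i * cnj (u i)) = 1" using c(2) by (simp add: u_def mult.commute)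
    have g2: "(\<Sum>i<n. v i * cnj (v i)) = 1" using a(2) by (simp add: v_def)
    have g3: "\<forall>i<n. (\<Sum>p<n. A i p * v p) = of_real 0 * u i" unfolding Av using y0 by simp
    have g4: "\<forall>p<n. (\<Sum>i<n. cnj (A i p) * u i) = of_real 0 * v p"
    proof (intro allI impI)
      fix p assume p: "p < n"
      have "(\<Sum>i<n. cnj (A i p) * u i) = cnj (\<Sum>i<n. w i * A i p) / of_real c"
        by (simp add: u_def cnj_sum sum_divide_distrib mult.commute)
      then show "(\<Sum>i<n. cnj (A i p) * u i) = of_real 0 * v p" using w(2) p by simp
    qed
    show ?thesis
      by (rule exI[of _ "0::real"], rule exI[of _ u], rule exI[of _ v]) (use g1 g2 g3 g4 in simp)
  qed
qed

definition cext :: "nat \<Rightarrow> cmat \<Rightarrow> cmat" where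
  "cext n M = (\<lambda>a m. if a < n \<and> m < n then M a m else if a = n \<and> m = n then 1 else 0)"

lemma unitary_mult:
  assumes "unitary_mat n X" "unitary_mat n E"
  shows "unitary_mat n (cmm n X E)"
proof -
  have X: "isid n (cmm n X (cadj X))" and E: "isid n (cmm n E (cadj E))"
    using assms unitary_isid by auto
  have eq: "cmm n (cmm n X E) (cadj (cmm n X E)) = cmm n X (cmm n (cmm n E (cadj E)) (cadj X))"
    by (simp only: cadj_cmm cmm_assoc)
  show ?thesis unfolding unitary_isid isid_def eq
  proof (intro allI impI)
    fix i j assume ij: "i < n" "j < n"
    have "cmm n X (cmm n (cmm n E (cadj E)) (cadj X)) i j = cmm n X (cadj X) i j"
      by (rule cmm_cong) (use ij cmm_isid_left[OF E] in auto)
    then show "cmm n X (cmm n (cmm n E (cadj E)) (cadj X)) i j = (if i = j then 1 else 0)"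
      using X ij by (simp add: isid_def)
  qed
qed

lemma unitary_cext:
  assumes "unitary_mat n U"
  shows "unitary_mat (Suc n) (cext n U)"
  unfolding unitary_mat_def
proof (intro allI impI)
  fix i j assume ij: "i < Suc n" "j < Suc n"
  have "(\<Sum>m<Suc n. cext n U i m * cnj (cext n U j m)) =
      (\<Sum>m<n. cext n U i m * cnj (cext n U j m)) + cext n U i n * cnj (cext n U j n)" by simp
  also have "\<dots> = (if i = j then 1 else 0)"
  proof (cases "i < n \<and> j < n")
    case True
    then have "(\<Sum>m<n. cext n U i m * cnj (cext n U j m)) = (\<Sum>m<n. U i m * cnj (U j m))"
      by (intro sum.cong) (auto simp: cext_def)
    then show ?thesis using True assms by (simp add: unitary_mat_def cext_def)
  next
    case False
    then have "(\<Sum>m<n. cext n U i m * cnj (cext n U j m)) = 0"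
      by (intro sum.neutral) (auto simp: cext_def)
    then show ?thesis using False ij by (auto simp: cext_def)
  qed
  finally show "(\<Sum>m<Suc n. cext n U i m * cnj (cext n U j m)) = (if i = j then 1 else 0)" .
qed

lemma sandwich:
  assumes "unitary_mat n X" "unitary_mat n Y" "i < n" "p < n"
  shows "cmm n (cmm n X (cmm n (cmm n (cadj X) A) Y)) (cadj Y) i p = A i p"
proof -
  have X: "isid n (cmm n X (cadj X))" and Y: "isid n (cmm n Y (cadj Y))"
    using assms unitary_isid by auto
  have "cmm n (cmm n X (cmm n (cmm n (cadj X) A) Y)) (cadj Y) =
        cmm n (cmm n (cmm n X (cadj X)) A) (cmm n Y (cadj Y))"
    by (simp only: cmm_assoc)
  moreover have "cmm n (cmm n (cmm n X (cadj X)) A) (cmm n Y (cadj Y)) i p = cmm n (cmm n X (cadj X)) A i p"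
    using assms(3,4) cmm_isid_right[OF Y] by blast
  moreover have "cmm n (cmm n X (cadj X)) A i p = A i p"
    using assms(3,4) cmm_isid_left[OF X] by blast
  ultimately show ?thesis by simp
qed

lemma svd_unsorted:
  fixes n :: nat
  shows "\<forall>A::cmat. \<exists>U V s. unitary_mat n U \<and> unitary_mat n V \<and> (\<forall>m. 0 \<le> s m) \<and>
           (\<forall>i<n. \<forall>p<n. A i p = (\<Sum>m<n. U i m * of_real (s m) * cnj (V p m)))"
proof (induction n)
  case 0
  show ?case by (auto simp: unitary_mat_def intro!: exI[of _ "\<lambda>_. 0"])
next
  case (Suc n)
  show ?case
  proof
    fix A :: cmat
    obtain \<sigma> u v where sv: "0 \<le> \<sigma>" "(\<Sum>i<Suc n. u i * cnj (u i)) = 1" "(\<Sum>i<Suc n. v i * cnj (v i)) = 1"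
      "\<forall>i<Suc n. (\<Sum>p<Suc n. A i p * v p) = of_real \<sigma> * u i"
      "\<forall>p<Suc n. (\<Sum>i<Suc n. cnj (A i p) * u i) = of_real \<sigma> * v p"
      using exists_sv_pair[of "Suc n" A] by auto
    obtain X where X: "unitary_mat (Suc n) X" "\<forall>i<Suc n. X i n = u i"
      using exists_unitary_lastcol[where n=n and u=u] sv(2) by auto
    obtain Y where Y: "unitary_mat (Suc n) Y" "\<forall>i<Suc n. Y i n = v i"
      using exists_unitary_lastcol[where n=n and u=v] sv(3) by auto
    have XX: "isid (Suc n) (cmm (Suc n) (cadj X) X)" and YY: "isid (Suc n) (cmm (Suc n) (cadj Y) Y)"
      using X Y unitary_isid2 by auto
    define B where "B = cmm (Suc n) (cmm (Suc n) (cadj X) A) Y"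
    have Bcol: "B i n = (if i = n then of_real \<sigma> else 0)" if i: "i < Suc n" for i
    proof -
      have "B i n = (\<Sum>b<Suc n. \<Sum>a<Suc n. cnj (X a i) * A a b * Y b n)"
        unfolding B_def cmm_def cadj_def by (simp only: sum_distrib_right)
      also have "\<dots> = (\<Sum>a<Suc n. \<Sum>b<Suc n. cnj (X a i) * A a b * Y b n)" by (rule sum.swap)
      also have "\<dots> = (\<Sum>a<Suc n. cnj (X a i) * (\<Sum>b<Suc n. A a b * v b))"
        using Y(2) by (simp add: sum_distrib_left mult.assoc del: sum.lessThan_Suc)
      also have "\<dots> = (\<Sum>a<Suc n. cnj (X a i) * (of_real \<sigma> * X a n))"
        using sv(4) X(2) by (intro sum.cong) auto
      also have "\<dots> = of_real \<sigma> * cmm (Suc n) (cadj X) X i n"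
        by (simp add: cmm_def cadj_def sum_distrib_left algebra_simps del: sum.lessThan_Suc)
      finally show ?thesis using XX i by (simp add: isid_def)
    qed
    have Brow: "B n j = (if j = n then of_real \<sigma> else 0)" if j: "j < Suc n" for j
    proof -
      have r: "(\<Sum>a<Suc n. cnj (X a n) * A a b) = of_real \<sigma> * cnj (v b)" if "b < Suc n" for b
      proof -
        have "(\<Sum>a<Suc n. cnj (X a n) * A a b) = cnj (\<Sum>a<Suc n. cnj (A a b) * u a)"
          using X(2) by (simp add: cnj_sum mult.commute del: sum.lessThan_Suc)
        also have "\<dots> = of_real \<sigma> * cnj (v b)" using sv(5) that by simp
        finally show ?thesis .
      qed
      have "B n j = (\<Sum>b<Suc n. (\<Sum>a<Suc n. cnj (X a n) * A a b) * Y b j)"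
        by (simp add: B_def cmm_def cadj_def del: sum.lessThan_Suc)
      also have "\<dots> = (\<Sum>b<Suc n. of_real \<sigma> * cnj (Y b n) * Y b j)"
        using r Y(2) by (intro sum.cong) auto
      also have "\<dots> = of_real \<sigma> * cmm (Suc n) (cadj Y) Y n j"
        by (simp add: cmm_def cadj_def sum_distrib_left algebra_simps del: sum.lessThan_Suc)
      finally show ?thesis using YY j by (simp add: isid_def)
    qed
    obtain U' V' s' where IH: "unitary_mat n U'" "unitary_mat n V'" "\<forall>m. 0 \<le> s' m"
      "\<forall>i<n. \<forall>p<n. B i p = (\<Sum>m<n. U' i m * of_real (s' m) * cnj (V' p m))"
      using Suc.IH by blast
    define s where "s m = (if m < n then s' m else \<sigma>)" for m
    define S where "S = cdiag (\<lambda>m. complex_of_real (s m))"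
    define EU where "EU = cext n U'"
    define EV where "EV = cext n V'"
    have Beq: "B a b = cmm (Suc n) (cmm (Suc n) EU S) (cadj EV) a b" if ab: "a < Suc n" "b < Suc n" for a b
    proof -
      have r: "cmm (Suc n) (cmm (Suc n) EU S) (cadj EV) a b = (\<Sum>m<Suc n. EU a m * of_real (s m) * cnj (EV b m))"
        unfolding S_def cmm_diag by (simp add: cadj_def del: sum.lessThan_Suc)
      show ?thesis
      proof (cases "a < n \<and> b < n")
        case True
        have "(\<Sum>m<Suc n. EU a m * of_real (s m) * cnj (EV b m)) = (\<Sum>m<n. U' a m * of_real (s' m) * cnj (V' b m))"
          using True by (simp add: EU_def EV_def cext_def s_def)
        then show ?thesis using r IH(4) True by simp
      next
        case False
        have z: "(\<Sum>m<n. EU a m * of_real (s m) * cnj (EV b m)) = 0"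
          using False ab by (intro sum.neutral) (auto simp: EU_def EV_def cext_def)
        have "(\<Sum>m<Suc n. EU a m * of_real (s m) * cnj (EV b m)) = EU a n * of_real (s n) * cnj (EV b n)"
          using z by simp
        then show ?thesis using r False ab Bcol Brow by (auto simp: EU_def EV_def cext_def s_def)
      qed
    qed
    define U where "U = cmm (Suc n) X EU"
    define V where "V = cmm (Suc n) Y EV"
    have "unitary_mat (Suc n) U" unfolding U_def EU_def by (intro unitary_mult X(1) unitary_cext IH(1))
    moreover have "unitary_mat (Suc n) V" unfolding V_def EV_def by (intro unitary_mult Y(1) unitary_cext IH(2))
    moreover have "\<forall>m. 0 \<le> s m" using IH(3) sv(1) by (simp add: s_def)
    moreover have "\<forall>i<Suc n. \<forall>p<Suc n. A i p = (\<Sum>m<Suc n. U i m * of_real (s m) * cnj (V p m))"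
    proof (intro allI impI)
      fix i p assume ip: "i < Suc n" "p < Suc n"
      have "A i p = cmm (Suc n) (cmm (Suc n) X B) (cadj Y) i p"
        using sandwich[OF X(1) Y(1) ip, of A] by (simp add: B_def)
      also have "\<dots> = cmm (Suc n) (cmm (Suc n) X (cmm (Suc n) (cmm (Suc n) EU S) (cadj EV))) (cadj Y) i p"
        by (rule cmm_cong) (auto intro: cmm_cong Beq simp: ip)
      also have "cmm (Suc n) (cmm (Suc n) X (cmm (Suc n) (cmm (Suc n) EU S) (cadj EV))) (cadj Y) =
           cmm (Suc n) (cmm (Suc n) U S) (cadj V)"
        by (simp only: U_def V_def cadj_cmm cmm_assoc)
      also have "cmm (Suc n) (cmm (Suc n) U S) (cadj V) i p = (\<Sum>m<Suc n. U i m * of_real (s m) * cnj (V p m))"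
        unfolding S_def cmm_diag by (simp add: cadj_def del: sum.lessThan_Suc)
      finally show "A i p = (\<Sum>m<Suc n. U i m * of_real (s m) * cnj (V p m))" .
    qed
    ultimately show "\<exists>U V s. unitary_mat (Suc n) U \<and> unitary_mat (Suc n) V \<and> (\<forall>m. 0 \<le> s m) \<and>
           (\<forall>i<Suc n. \<forall>p<Suc n. A i p = (\<Sum>m<Suc n. U i m * of_real (s m) * cnj (V p m)))"
      by blast
  qed
qed

lemma sort_perm:
  fixes s :: "nat \<Rightarrow> real" and d :: nat
  obtains p where "p permutes {..<d}" "\<And>i j. i \<le> j \<Longrightarrow> j < d \<Longrightarrow> s (p j) \<le> s (p i)"
proof -
  define xs where "xs = map s [0..<d]"
  define ys where "ys = rev (sort xs)"
  have "mset ys = mset xs" by (simp add: ys_def)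
  then obtain p where p: "p permutes {..<length xs}" "permute_list p xs = ys"
    using mset_eq_permutation by metis
  have lx: "length xs = d" by (simp add: xs_def)
  have nth: "s (p i) = ys ! i" if "i < d" for i
  proof -
    have "ys ! i = xs ! p i" using permute_list_nth[OF p(1)] p(2) that lx by metis
    moreover have "p i < d" using permutes_in_image[OF p(1)] that lx by simp
    ultimately show ?thesis by (simp add: xs_def)
  qed
  have "s (p j) \<le> s (p i)" if "i \<le> j" "j < d" for i j
  proof -
    have "ys ! j = sort xs ! (d - Suc j)" "ys ! i = sort xs ! (d - Suc i)"
      using that lx by (simp_all add: ys_def rev_nth)
    moreover have "sort xs ! (d - Suc j) \<le> sort xs ! (d - Suc i)"
      by (rule sorted_nth_mono) (use that lx in auto)
    ultimately show ?thesis using nth that by simp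
  qed
  then show ?thesis using that p(1) lx by auto
qed

lemma svd_exists: "\<exists>s. is_singular_values d a s"
proof -
  obtain U V s where UV: "unitary_mat d U" "unitary_mat d V" "\<forall>m. 0 \<le> s m"
    "\<forall>i<d. \<forall>p<d. a i p = (\<Sum>m<d. U i m * of_real (s m) * cnj (V p m))"
    using svd_unsorted[of d] by blast
  obtain \<pi> where pi: "\<pi> permutes {..<d}" "\<And>i j. i \<le> j \<Longrightarrow> j < d \<Longrightarrow> s (\<pi> j) \<le> s (\<pi> i)"
    using sort_perm by blast
  define s2 where "s2 m = (if m < d then s (\<pi> m) else 0)" for m
  define U2 where "U2 i m = U i (\<pi> m)" for i m
  define V2 where "V2 i m = V i (\<pi> m)" for i m
  have perm: "(\<Sum>m<d. g (\<pi> m)) = (\<Sum>m<d. g m)" for g :: "nat \<Rightarrow> complex"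
    using sum.permute[OF pi(1), of g] by (simp add: comp_def)
  have "unitary_mat d U2" using UV(1) unfolding unitary_mat_def U2_def
    using perm[of "\<lambda>m. U _ m * cnj (U _ m)"] by simp
  moreover have "unitary_mat d V2" using UV(2) unfolding unitary_mat_def V2_def
    using perm[of "\<lambda>m. V _ m * cnj (V _ m)"] by simp
  moreover have "\<forall>i<d. \<forall>p<d. a i p = (\<Sum>m<d. U2 i m * of_real (s2 m) * cnj (V2 p m))"
  proof (intro allI impI)
    fix i p assume "i < d" "p < d"
    have "(\<Sum>m<d. U2 i m * of_real (s2 m) * cnj (V2 p m)) = (\<Sum>m<d. U i (\<pi> m) * of_real (s (\<pi> m)) * cnj (V p (\<pi> m)))"
      by (intro sum.cong) (auto simp: U2_def V2_def s2_def)
    also have "\<dots> = (\<Sum>m<d. U i m * of_real (s m) * cnj (V p m))"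
      by (rule perm)
    finally show "a i p = (\<Sum>m<d. U2 i m * of_real (s2 m) * cnj (V2 p m))" using UV(4) \<open>i < d\<close> \<open>p < d\<close> by simp
  qed
  moreover have "\<forall>j. 0 \<le> s2 j" using UV(3) by (simp add: s2_def)
  moreover have "\<forall>j. d \<le> j \<longrightarrow> s2 j = 0" by (simp add: s2_def)
  moreover have "\<forall>i j. i \<le> j \<longrightarrow> j < d \<longrightarrow> s2 j \<le> s2 i" using pi(2) by (simp add: s2_def)
  ultimately show ?thesis unfolding is_singular_values_def by blast
qed

lemma schmidt_sv: "is_singular_values d a (schmidt d a)"
  unfolding schmidt_def using svd_exists by (rule someI_ex)

lemma unitary_col_norm:
  assumes "unitary_mat n U" "m < n"
  shows "(\<Sum>k<n. (cmod (U k m))^2) = 1"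
proof -
  have "cmm n (cadj U) U m m = 1" using unitary_isid2[OF assms(1)] assms(2) by (simp add: isid_def)
  then have "(\<Sum>k<n. U k m * cnj (U k m)) = 1" by (simp add: cmm_def cadj_def mult.commute)
  then have "of_real (\<Sum>k<n. (cmod (U k m))^2) = (1::complex)" by (simp only: sum_sq_real)
  then show ?thesis by (metis of_real_1 of_real_eq_iff)
qed

lemma unitary_row_norm:
  assumes "unitary_mat n U" "i < n"
  shows "(\<Sum>k<n. (cmod (U i k))^2) = 1"
proof -
  have "(\<Sum>k<n. U i k * cnj (U i k)) = 1" using assms by (simp add: unitary_mat_def)
  then have "of_real (\<Sum>k<n. (cmod (U i k))^2) = (1::complex)" by (simp only: sum_sq_real)
  then show ?thesis by (metis of_real_1 of_real_eq_iff)
qed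

lemma unitary_iso:
  fixes n :: nat and U :: cmat and w :: "nat \<Rightarrow> complex"
  assumes "unitary_mat n U"
  shows "(\<Sum>k<n. (\<Sum>j<n. U k j * w j) * cnj (\<Sum>i<n. U k i * w i)) = (\<Sum>i<n. w i * cnj (w i))"
proof -
  have I: "isid n (cmm n (cadj U) U)" using unitary_isid2[OF assms] .
  have "(\<Sum>k<n. (\<Sum>j<n. U k j * w j) * cnj (\<Sum>i<n. U k i * w i)) = (\<Sum>i<n. cnj (w i) * (\<Sum>j<n. (\<Sum>k<n. cnj (U k i) * U k j) * w j))"
    by (rule quad_identity)
  also have "\<dots> = (\<Sum>i<n. cnj (w i) * (\<Sum>j<n. (if i = j then w j else 0)))"
  proof (rule sum.cong[OF refl])
    fix i assume i: "i \<in> {..<n}"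
    have "(\<Sum>j<n. (\<Sum>k<n. cnj (U k i) * U k j) * w j) = (\<Sum>j<n. (if i = j then w j else 0))"
    proof (rule sum.cong[OF refl])
      fix j assume "j \<in> {..<n}"
      then show "(\<Sum>k<n. cnj (U k i) * U k j) * w j = (if i = j then w j else 0)"
        using I i by (simp add: isid_def cmm_def cadj_def)
    qed
    then show "cnj (w i) * (\<Sum>j<n. (\<Sum>k<n. cnj (U k i) * U k j) * w j) = cnj (w i) * (\<Sum>j<n. (if i = j then w j else 0))"
      by simp
  qed
  also have "\<dots> = (\<Sum>i<n. w i * cnj (w i))" by (simp add: mult.commute)
  finally show ?thesis .
qed

lemma cs_unit:
  fixes n :: nat and x y :: "nat \<Rightarrow> complex"
  assumes "(\<Sum>i<n. (cmod (x i))^2) = 1" "(\<Sum>i<n. (cmod (y i))^2) = 1"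
  shows "cmod (\<Sum>i<n. x i * cnj (y i)) \<le> 1"
proof -
  have "cmod (\<Sum>i<n. x i * cnj (y i)) \<le> (\<Sum>i<n. cmod (x i * cnj (y i)))" by (rule norm_sum)
  also have "\<dots> = (\<Sum>i<n. cmod (x i) * cmod (y i))" by (simp add: norm_mult)
  also have "\<dots> \<le> (\<Sum>i<n. ((cmod (x i))^2 + (cmod (y i))^2) / 2)"
  proof (rule sum_mono)
    fix i
    have "0 \<le> (cmod (x i) - cmod (y i))^2" by simp
    then show "cmod (x i) * cmod (y i) \<le> ((cmod (x i))^2 + (cmod (y i))^2) / 2"
      by (simp add: power2_eq_square algebra_simps)
  qed
  also have "\<dots> = ((\<Sum>i<n. (cmod (x i))^2) + (\<Sum>i<n. (cmod (y i))^2)) / 2"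
    by (simp add: sum.distrib sum_divide_distrib add_divide_distrib)
  also have "\<dots> = 1" using assms by simp
  finally show ?thesis .
qed

lemma svD:
  assumes "is_singular_values d a s"
  shows "\<exists>U V. unitary_mat d U \<and> unitary_mat d V \<and>
        (\<forall>i<d. \<forall>p<d. a i p = (\<Sum>m<d. U i m * complex_of_real (s m) * cnj (V p m)))"
    "\<forall>j. 0 \<le> s j" "\<forall>j. d \<le> j \<longrightarrow> s j = 0" "\<forall>i j. i \<le> j \<longrightarrow> j < d \<longrightarrow> s j \<le> s i"
  using assms unfolding is_singular_values_def by simp_all

lemma sv_trace:
  assumes "is_singular_values d a s"
  shows "cmod (\<Sum>i<d. a i i) \<le> (\<Sum>m<d. s m)"
proof -
  obtain U V where UV: "unitary_mat d U" "unitary_mat d V"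
    "\<forall>i<d. \<forall>p<d. a i p = (\<Sum>m<d. U i m * complex_of_real (s m) * cnj (V p m))"
    using svD(1)[OF assms] by blast
  have s0: "\<forall>m. 0 \<le> s m" using svD(2)[OF assms] .
  have "(\<Sum>i<d. a i i) = (\<Sum>i<d. \<Sum>m<d. U i m * complex_of_real (s m) * cnj (V i m))"
    using UV(3) by simp
  also have "\<dots> = (\<Sum>m<d. \<Sum>i<d. U i m * complex_of_real (s m) * cnj (V i m))"
    by (rule sum.swap)
  also have "\<dots> = (\<Sum>m<d. of_real (s m) * (\<Sum>i<d. U i m * cnj (V i m)))"
    by (simp only: sum_distrib_left mult_ac)
  finally have tr: "(\<Sum>i<d. a i i) = (\<Sum>m<d. of_real (s m) * (\<Sum>i<d. U i m * cnj (V i m)))" .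
  have "cmod (\<Sum>i<d. a i i) \<le> (\<Sum>m<d. cmod (of_real (s m) * (\<Sum>i<d. U i m * cnj (V i m))))"
    unfolding tr by (rule norm_sum)
  also have "\<dots> \<le> (\<Sum>m<d. s m)"
  proof (rule sum_mono)
    fix m assume m: "m \<in> {..<d}"
    have "cmod (\<Sum>i<d. U i m * cnj (V i m)) \<le> 1"
      using m by (intro cs_unit unitary_col_norm UV) auto
    moreover have "cmod (of_real (s m) * (\<Sum>i<d. U i m * cnj (V i m))) = s m * cmod (\<Sum>i<d. U i m * cnj (V i m))"
      using s0 by (simp only: norm_mult norm_of_real abs_of_nonneg)
    ultimately show "cmod (of_real (s m) * (\<Sum>i<d. U i m * cnj (V i m))) \<le> s m"
      using s0 by (simp add: mult_left_le)
  qed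
  finally show ?thesis .
qed

lemma sv_frob:
  assumes "is_singular_values d a s"
  shows "(\<Sum>i<d. \<Sum>p<d. (cmod (a i p))^2) = (\<Sum>m<d. (s m)^2)"
proof -
  obtain U V where UV: "unitary_mat d U" "unitary_mat d V"
    "\<forall>i<d. \<forall>p<d. a i p = (\<Sum>m<d. U i m * complex_of_real (s m) * cnj (V p m))"
    using svD(1)[OF assms] by blast
  have col: "(\<Sum>i<d. a i p * cnj (a i p)) = (\<Sum>m<d. of_real ((s m)^2) * (cnj (V p m) * V p m))" if p: "p < d" for p
  proof -
    define w where "w m = complex_of_real (s m) * cnj (V p m)" for m
    have "(\<Sum>i<d. a i p * cnj (a i p)) = (\<Sum>i<d. (\<Sum>j<d. U i j * w j) * cnj (\<Sum>j<d. U i j * w j))"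
      using UV(3) p by (intro sum.cong) (auto simp: w_def mult.assoc)
    also have "\<dots> = (\<Sum>m<d. w m * cnj (w m))" by (rule unitary_iso[OF UV(1)])
    also have "\<dots> = (\<Sum>m<d. of_real ((s m)^2) * (cnj (V p m) * V p m))"
      by (simp add: w_def power2_eq_square algebra_simps)
    finally show ?thesis .
  qed
  have "of_real (\<Sum>i<d. \<Sum>p<d. (cmod (a i p))^2) = (\<Sum>i<d. \<Sum>p<d. a i p * cnj (a i p))"
    by (simp only: of_real_sum complex_norm_square)
  also have "\<dots> = (\<Sum>p<d. \<Sum>i<d. a i p * cnj (a i p))" by (rule sum.swap)
  also have "\<dots> = (\<Sum>p<d. \<Sum>m<d. of_real ((s m)^2) * (cnj (V p m) * V p m))"
    using col by simp
  also have "\<dots> = (\<Sum>m<d. \<Sum>p<d. of_real ((s m)^2) * (cnj (V p m) * V p m))"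
    by (rule sum.swap)
  also have "\<dots> = (\<Sum>m<d. of_real ((s m)^2) * (\<Sum>p<d. cnj (V p m) * V p m))"
    by (simp only: sum_distrib_left)
  also have "\<dots> = (\<Sum>m<d. of_real ((s m)^2))"
  proof (intro sum.cong refl)
    fix m assume "m \<in> {..<d}"
    then have "cmm d (cadj V) V m m = 1" using unitary_isid2[OF UV(2)] by (simp add: isid_def)
    then show "of_real ((s m)^2) * (\<Sum>p<d. cnj (V p m) * V p m) = of_real ((s m)^2)"
      by (simp add: cmm_def cadj_def)
  qed
  also have "\<dots> = of_real (\<Sum>m<d. (s m)^2)" by simp
  finally show ?thesis by (metis of_real_eq_iff)
qed

lemma count_list_filter: "count_list xs x = length (filter (\<lambda>y. y = x) xs)"
  by (induction xs) auto

lemma count_map_upt: "count (mset (map f [0..<d])) x = card {i. i < d \<and> f i = x}"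
proof -
  have "{i. i < d \<and> map f [0..<d] ! i = x} = {i. i < d \<and> f i = x}" by auto
  then show ?thesis unfolding count_mset count_list_filter length_filter_conv_card by simp
qed

lemma sorted_rev_map:
  fixes f :: "nat \<Rightarrow> real"
  assumes "\<forall>i j. i \<le> j \<longrightarrow> j < d \<longrightarrow> f j \<le> f i"
  shows "sorted (rev (map f [0..<d]))"
  unfolding sorted_iff_nth_mono_less
proof (intro allI impI)
  fix i j assume ij: "i < j" "j < length (rev (map f [0..<d]))"
  then show "rev (map f [0..<d]) ! i \<le> rev (map f [0..<d]) ! j"
    using assms by (simp add: rev_nth)
qed

lemma count_card_eq:
  fixes d :: nat and U :: cmat and f g :: "nat \<Rightarrow> real"
  assumes U: "unitary_mat d U"
    and fg: "\<forall>i<d. \<forall>m<d. f i \<noteq> g m \<longrightarrow> U i m = 0"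
  shows "card {i. i < d \<and> f i = x} = card {m. m < d \<and> g m = x}"
proof -
  define I where "I = {i. i < d \<and> f i = x}"
  define J where "J = {m. m < d \<and> g m = x}"
  have fin: "finite I" "finite J" "I \<subseteq> {..<d}" "J \<subseteq> {..<d}" by (auto simp: I_def J_def)
  have "real (card I) = (\<Sum>i\<in>I. 1)" by simp
  also have "\<dots> = (\<Sum>i\<in>I. \<Sum>m<d. (cmod (U i m))^2)"
    using unitary_row_norm[OF U] fin(3) by (intro sum.cong) auto
  also have "\<dots> = (\<Sum>i\<in>I. \<Sum>m\<in>J. (cmod (U i m))^2)"
  proof (rule sum.cong[OF refl])
    fix i assume i: "i \<in> I"
    show "(\<Sum>m<d. (cmod (U i m))^2) = (\<Sum>m\<in>J. (cmod (U i m))^2)"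
      by (rule sum.mono_neutral_right) (use i fg fin in \<open>auto simp: I_def J_def\<close>)
  qed
  also have "\<dots> = (\<Sum>m\<in>J. \<Sum>i\<in>I. (cmod (U i m))^2)" by (rule sum.swap)
  also have "\<dots> = (\<Sum>m\<in>J. \<Sum>i<d. (cmod (U i m))^2)"
  proof (rule sum.cong[OF refl])
    fix m assume m: "m \<in> J"
    show "(\<Sum>i\<in>I. (cmod (U i m))^2) = (\<Sum>i<d. (cmod (U i m))^2)"
      by (rule sum.mono_neutral_left) (use m fg fin in \<open>auto simp: I_def J_def\<close>)
  qed
  also have "\<dots> = (\<Sum>m\<in>J. 1)"
    using unitary_col_norm[OF U] fin(4) by (intro sum.cong) auto
  also have "\<dots> = real (card J)" by simp
  finally show ?thesis unfolding I_def J_def by linarith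
qed

lemma spectrum_unique:
  fixes d :: nat and U :: cmat and f g :: "nat \<Rightarrow> real"
  assumes U: "unitary_mat d U"
    and fg: "\<forall>i<d. \<forall>m<d. f i \<noteq> g m \<longrightarrow> U i m = 0"
    and mf: "\<forall>i j. i \<le> j \<longrightarrow> j < d \<longrightarrow> f j \<le> f i"
    and mg: "\<forall>i j. i \<le> j \<longrightarrow> j < d \<longrightarrow> g j \<le> g i"
  shows "\<forall>i<d. f i = g i"
proof -
  have "mset (map f [0..<d]) = mset (map g [0..<d])"
    by (rule multiset_eqI) (simp only: count_map_upt count_card_eq[OF U fg])
  then have ms: "mset (rev (map g [0..<d])) = mset (rev (map f [0..<d]))" by simp
  have "sort (rev (map g [0..<d])) = rev (map f [0..<d])"
    by (rule properties_for_sort[OF ms[symmetric] sorted_rev_map[OF mf]])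
  moreover have "sort (rev (map g [0..<d])) = rev (map g [0..<d])"
    by (rule sorted_sort_id[OF sorted_rev_map[OF mg]])
  ultimately have "map f [0..<d] = map g [0..<d]" by simp
  then show ?thesis by (metis add_0 diff_zero nth_map_upt)
qed

lemma schmidt_diag:
  fixes c :: "nat \<Rightarrow> real" and x :: cmat
  assumes c0: "\<forall>j. 0 \<le> c j" and cd: "\<forall>j. d \<le> j \<longrightarrow> c j = 0"
    and mono: "\<forall>i j. i \<le> j \<longrightarrow> j < d \<longrightarrow> c j \<le> c i"
    and x: "\<forall>i<d. \<forall>p<d. x i p = (if i = p then complex_of_real (c i) else 0)"
  shows "schmidt d x = c"
proof -
  define s where "s = schmidt d x"
  have sv: "is_singular_values d x s" unfolding s_def by (rule schmidt_sv)
  obtain U V where UV: "unitary_mat d U" "unitary_mat d V"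
    "\<forall>i<d. \<forall>p<d. x i p = (\<Sum>m<d. U i m * complex_of_real (s m) * cnj (V p m))"
    using svD(1)[OF sv] by blast
  have UU: "isid d (cmm d (cadj U) U)" and VV: "isid d (cmm d (cadj V) V)"
    using UV unitary_isid2 by auto
  have A: "of_real (c i) * V i m = U i m * of_real (s m)" if im: "i < d" "m < d" for i m
  proof -
    have "(\<Sum>p<d. x i p * V p m) = (\<Sum>p<d. if p = i then of_real (c i) * V i m else 0)"
      using x im by (intro sum.cong) auto
    then have l: "(\<Sum>p<d. x i p * V p m) = of_real (c i) * V i m" using im by simp
    have "(\<Sum>p<d. x i p * V p m) = (\<Sum>p<d. \<Sum>k<d. U i k * complex_of_real (s k) * (cnj (V p k) * V p m))"
      using UV(3) im by (simp add: sum_distrib_right mult.assoc)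
    also have "\<dots> = (\<Sum>k<d. \<Sum>p<d. U i k * complex_of_real (s k) * (cnj (V p k) * V p m))" by (rule sum.swap)
    also have "\<dots> = (\<Sum>k<d. U i k * complex_of_real (s k) * cmm d (cadj V) V k m)"
      by (simp add: cmm_def cadj_def sum_distrib_left)
    also have "\<dots> = (\<Sum>k<d. if k = m then U i m * complex_of_real (s m) else 0)"
      using VV im by (intro sum.cong) (auto simp: isid_def)
    also have "\<dots> = U i m * of_real (s m)" using im by simp
    finally show ?thesis using l by simp
  qed
  have B: "of_real (c p) * U p m = of_real (s m) * V p m" if pm: "p < d" "m < d" for p m
  proof -
    have "(\<Sum>i<d. cnj (x i p) * U i m) = (\<Sum>i<d. if i = p then of_real (c p) * U p m else 0)"
      using x pm by (intro sum.cong) auto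
    then have l: "(\<Sum>i<d. cnj (x i p) * U i m) = of_real (c p) * U p m" using pm by simp
    have "(\<Sum>i<d. cnj (x i p) * U i m) = (\<Sum>i<d. cnj (\<Sum>k<d. U i k * complex_of_real (s k) * cnj (V p k)) * U i m)"
      using UV(3) pm by (intro sum.cong) auto
    also have "\<dots> = (\<Sum>i<d. \<Sum>k<d. complex_of_real (s k) * V p k * (cnj (U i k) * U i m))"
      by (simp add: cnj_sum sum_distrib_right sum_distrib_left mult_ac)
    also have "\<dots> = (\<Sum>k<d. \<Sum>i<d. complex_of_real (s k) * V p k * (cnj (U i k) * U i m))" by (rule sum.swap)
    also have "\<dots> = (\<Sum>k<d. complex_of_real (s k) * V p k * cmm d (cadj U) U k m)"
      by (simp add: cmm_def cadj_def sum_distrib_left)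
    also have "\<dots> = (\<Sum>k<d. if k = m then of_real (s m) * V p m else 0)"
      using UU pm by (intro sum.cong) (auto simp: isid_def)
    also have "\<dots> = of_real (s m) * V p m" using pm by simp
    finally show ?thesis using l by simp
  qed
  have fg: "\<forall>i<d. \<forall>m<d. (c i)^2 \<noteq> (s m)^2 \<longrightarrow> U i m = 0"
  proof (intro allI impI)
    fix i m assume im: "i < d" "m < d" and ne: "(c i)^2 \<noteq> (s m)^2"
    have "of_real ((c i)^2) * U i m = of_real (c i) * (of_real (s m) * V i m)"
      using B[OF im] by (simp add: power2_eq_square mult.assoc)
    also have "\<dots> = of_real (s m) * (of_real (c i) * V i m)" by (simp add: mult_ac)
    also have "\<dots> = of_real ((s m)^2) * U i m" using A[OF im] by (simp add: power2_eq_square mult_ac)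
    finally have "(of_real ((c i)^2) - of_real ((s m)^2)) * U i m = 0" by (simp add: algebra_simps)
    then show "U i m = 0" using ne by (simp del: of_real_power)
  qed
  have s0: "\<forall>j. 0 \<le> s j" using svD(2)[OF sv] .
  have eq: "\<forall>i<d. (c i)^2 = (s i)^2"
  proof (rule spectrum_unique[OF UV(1) fg])
    show "\<forall>i j. i \<le> j \<longrightarrow> j < d \<longrightarrow> (c j)^2 \<le> (c i)^2"
      using mono c0 by (auto intro: power_mono)
    show "\<forall>i j. i \<le> j \<longrightarrow> j < d \<longrightarrow> (s j)^2 \<le> (s i)^2"
      using svD(4)[OF sv] s0 by (auto intro: power_mono)
  qed
  have "s j = c j" for j
  proof (cases "j < d")
    case True
    then show ?thesis using eq c0 s0 by (metis power2_eq_imp_eq)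
  next
    case False
    then show ?thesis using svD(3)[OF sv] cd by simp
  qed
  then show ?thesis unfolding s_def by auto
qed

lemma qform_Phi:
  "qform d (choi (Phi_t d t)) x =
     (\<Sum>i<d. \<Sum>p<d. cnj (x i p) * x i p) - of_real t * (cnj (\<Sum>i<d. x i i) * (\<Sum>j<d. x j j))"
proof -
  have inner: "(\<Sum>q<d. cnj (x i p) * choi (Phi_t d t) (i, p) (j, q) * x j q) =
      cnj (x i p) * ((if i = j then x j p else 0) - of_real t * (if p = i then x j j else 0))"
    if "i < d" "p < d" "j < d" for i p j
  proof -
    have tr: "mtrace d (\<lambda>a b. if a = i \<and> b = j then 1 else 0) = (if i = j then 1 else 0)"
      using that by (simp add: mtrace_def mat_unit_def)
    have "(\<Sum>q<d. cnj (x i p) * choi (Phi_t d t) (i, p) (j, q) * x j q) =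
        (\<Sum>q<d. (if q = p then cnj (x i p) * (if i = j then 1 else 0) * x j q else 0)
              - (if q = j then cnj (x i p) * of_real t * (if p = i then 1 else 0) * x j q else 0))"
      by (intro sum.cong refl) (auto simp: choi_def Phi_t_def tr mat_unit_def algebra_simps)
    also have "\<dots> = cnj (x i p) * ((if i = j then x j p else 0) - of_real t * (if p = i then x j j else 0))"
      using that by (simp add: sum_subtractf algebra_simps)
    finally show ?thesis .
  qed
  have "qform d (choi (Phi_t d t)) x = (\<Sum>i<d. \<Sum>p<d. \<Sum>j<d.
      cnj (x i p) * ((if i = j then x j p else 0) - of_real t * (if p = i then x j j else 0)))"
    unfolding qform_def by (intro sum.cong refl) (simp add: inner)
  also have "\<dots> = (\<Sum>i<d. \<Sum>p<d. cnj (x i p) * x i p - (if p = i then of_real t * cnj (x i i) * (\<Sum>j<d. x j j) else 0))"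
  proof (intro sum.cong refl)
    fix i p assume ip: "i \<in> {..<d}" "p \<in> {..<d}"
    have "(\<Sum>j<d. cnj (x i p) * ((if i = j then x j p else 0) - of_real t * (if p = i then x j j else 0)))
       = (\<Sum>j<d. (if i = j then cnj (x i p) * x j p else 0) - (if p = i then of_real t * cnj (x i i) * x j j else 0))"
      by (intro sum.cong refl) (auto simp: algebra_simps)
    also have "\<dots> = cnj (x i p) * x i p - (if p = i then of_real t * cnj (x i i) * (\<Sum>j<d. x j j) else 0)"
      using ip by (simp add: sum_subtractf sum_distrib_left)
    finally show "(\<Sum>j<d. cnj (x i p) * ((if i = j then x j p else 0) - of_real t * (if p = i then x j j else 0)))
       = cnj (x i p) * x i p - (if p = i then of_real t * cnj (x i i) * (\<Sum>j<d. x j j) else 0)" .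
  qed
  also have "\<dots> = (\<Sum>i<d. \<Sum>p<d. cnj (x i p) * x i p) - (\<Sum>i<d. of_real t * cnj (x i i) * (\<Sum>j<d. x j j))"
    by (simp add: sum_subtractf)
  also have "\<dots> = (\<Sum>i<d. \<Sum>p<d. cnj (x i p) * x i p) - of_real t * (cnj (\<Sum>i<d. x i i) * (\<Sum>j<d. x j j))"
  proof -
    have "(\<Sum>i<d. of_real t * cnj (x i i) * (\<Sum>j<d. x j j)) = (\<Sum>i<d. of_real t * cnj (x i i)) * (\<Sum>j<d. x j j)"
      by (rule sum_distrib_right[symmetric])
    also have "\<dots> = of_real t * ((\<Sum>i<d. cnj (x i i)) * (\<Sum>j<d. x j j))"
      by (simp only: sum_distrib_left[symmetric] mult.assoc)
    finally show ?thesis by (simp add: cnj_sum)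
  qed
  finally show ?thesis .
qed

lemma Re_qform_Phi:
  "Re (qform d (choi (Phi_t d t)) x) = (\<Sum>i<d. \<Sum>p<d. (cmod (x i p))^2) - t * (cmod (\<Sum>i<d. x i i))^2"
proof -
  have a: "cnj z * z = of_real ((cmod z)^2)" for z :: complex
    by (metis complex_norm_square mult.commute)
  show ?thesis unfolding qform_Phi a by (simp add: of_real_sum[symmetric] del: of_real_sum)
qed

lemma cauchy_schwarz_sum:
  fixes s :: "nat \<Rightarrow> real"
  shows "(\<Sum>i<k. s i)^2 \<le> real k * (\<Sum>i<k. (s i)^2)"
proof -
  have "0 \<le> (\<Sum>i<k. \<Sum>j<k. (s i - s j)^2)" by (intro sum_nonneg) auto
  also have "\<dots> = (\<Sum>i<k. \<Sum>j<k. (s i)^2 + (s j)^2 - 2 * (s i * s j))"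
    by (simp add: power2_eq_square algebra_simps)
  also have "\<dots> = 2 * (real k * (\<Sum>i<k. (s i)^2)) - 2 * (\<Sum>i<k. s i)^2"
    by (simp add: sum.distrib sum_subtractf sum_distrib_left[symmetric] sum_distrib_right[symmetric]
        power2_eq_square algebra_simps)
  finally show ?thesis by simp
qed

lemma sum_split_k:
  fixes f :: "nat \<Rightarrow> real" and k d :: nat
  assumes "k \<le> d" "\<forall>j. Suc k \<le> j \<longrightarrow> f j = 0"
  shows "(\<Sum>m<d. f m) = (\<Sum>m<k. f m) + (if k < d then f k else 0)"
proof (cases "k < d")
  case True
  have "(\<Sum>m<d. f m) = (\<Sum>m<Suc k. f m)"
    by (rule sum.mono_neutral_right) (use True assms in auto)
  then show ?thesis using True by simp
next
  case False
  then have "d = k" using assms by simp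
  then show ?thesis by simp
qed

lemma poly_ineq:
  fixes k S u \<theta> :: real
  assumes "1 \<le> k" "0 \<le> \<theta>" "\<theta> < 1" "0 \<le> S" "0 \<le> u" "k * u \<le> \<theta> * S"
  shows "k * (S + u)^2 * (k + \<theta>^2) \<le> (k + \<theta>)^2 * (S^2 + k * u^2)"
proof -
  have id: "(k + \<theta>)^2 * (S^2 + k * u^2) - k * (S + u)^2 * (k + \<theta>^2)
      = (\<theta> * S - k * u) * ((2*k + \<theta> - k*\<theta>) * S - (k - 1 + 2*\<theta>) * (k * u))"
    by (simp add: power2_eq_square algebra_simps)
  have f1: "0 \<le> \<theta> * S - k * u" using assms by simp
  have "(k - 1 + 2*\<theta>) * (k * u) \<le> (k - 1 + 2*\<theta>) * (\<theta> * S)"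
    using assms by (intro mult_left_mono) auto
  moreover have "(k - 1 + 2*\<theta>) * (\<theta> * S) \<le> (2*k + \<theta> - k*\<theta>) * S"
  proof -
    have "(2*k + \<theta> - k*\<theta>) * S - (k - 1 + 2*\<theta>) * (\<theta> * S) = 2 * S * ((k + \<theta>) * (1 - \<theta>))"
      by (simp add: algebra_simps)
    moreover have "0 \<le> 2 * S * ((k + \<theta>) * (1 - \<theta>))" using assms by simp
    ultimately show ?thesis by linarith
  qed
  ultimately have f2: "0 \<le> (2*k + \<theta> - k*\<theta>) * S - (k - 1 + 2*\<theta>) * (k * u)" by linarith
  have "0 \<le> (\<theta> * S - k * u) * ((2*k + \<theta> - k*\<theta>) * S - (k - 1 + 2*\<theta>) * (k * u))"
    using f1 f2 by simp
  then show ?thesis using id by linarith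
qed

lemma opt_bound:
  fixes s :: "nat \<Rightarrow> real" and k d :: nat and \<theta> :: real
  assumes k1: "1 \<le> k" and kd: "k \<le> d" and th: "0 \<le> \<theta>" "\<theta> < 1"
    and s0: "\<forall>j. 0 \<le> s j"
    and norm: "(\<Sum>m<d. (s m)^2) = 1"
    and zero: "\<forall>j. Suc k \<le> j \<longrightarrow> s j = 0"
    and zero0: "\<theta> = 0 \<longrightarrow> s k = 0"
    and ineq: "\<theta> > 0 \<longrightarrow> s k \<le> \<theta> / real k * (\<Sum>j<k. s j)"
  shows "(\<Sum>m<d. s m)^2 \<le> (real k + \<theta>)^2 / (real k + \<theta>^2)"
proof -
  define S where "S = (\<Sum>m<k. s m)"
  define Q where "Q = (\<Sum>m<k. (s m)^2)"
  define u where "u = (if k < d then s k else 0)"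
  have sumS: "(\<Sum>m<d. s m) = S + u" unfolding S_def u_def by (rule sum_split_k[OF kd zero])
  have sumQ: "(\<Sum>m<d. (s m)^2) = Q + u^2" unfolding Q_def u_def
    using sum_split_k[OF kd, of "\<lambda>m. (s m)^2"] zero by simp
  have S0: "0 \<le> S" unfolding S_def using s0 by (simp add: sum_nonneg)
  have u0: "0 \<le> u" unfolding u_def using s0 by simp
  have kpos: "0 < real k" using k1 by simp
  have uS: "real k * u \<le> \<theta> * S"
  proof (cases "\<theta> > 0")
    case True
    have "u \<le> s k" using s0 by (simp add: u_def)
    also have "\<dots> \<le> \<theta> / real k * S" using ineq True by (simp add: S_def)
    finally show ?thesis using kpos by (simp add: field_simps)
  next
    case False
    then have "\<theta> = 0" using th by simp
    then show ?thesis using zero0 by (simp add: u_def)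
  qed
  have CS: "S^2 \<le> real k * Q" unfolding S_def Q_def by (rule cauchy_schwarz_sum)
  have "real k * (S + u)^2 * (real k + \<theta>^2) \<le> (real k + \<theta>)^2 * (S^2 + real k * u^2)"
    by (rule poly_ineq) (use k1 th S0 u0 uS in auto)
  also have "\<dots> \<le> (real k + \<theta>)^2 * (real k * Q + real k * u^2)"
    using CS by (intro mult_left_mono) auto
  also have "\<dots> = (real k + \<theta>)^2 * (real k * (Q + u^2))" by (simp add: algebra_simps)
  also have "\<dots> = real k * (real k + \<theta>)^2" using norm sumQ by simp
  finally have "(S + u)^2 * (real k + \<theta>^2) \<le> (real k + \<theta>)^2" using kpos by (simp add: mult.assoc)
  moreover have "0 < real k + \<theta>^2" using kpos by (simp add: add_pos_nonneg)
  ultimately show ?thesis unfolding sumS by (simp add: field_simps)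
qed

lemma agree_sv: "(\<forall>i<d. \<forall>p<d. a i p = b i p) \<Longrightarrow> is_singular_values d a = is_singular_values d b"
  unfolding is_singular_values_def by (intro ext) auto

lemma diag_sums:
  fixes c :: "nat \<Rightarrow> real" and x :: cmat
  assumes c0: "\<forall>j. 0 \<le> c j"
    and x: "\<forall>i<d. \<forall>p<d. x i p = (if i = p then complex_of_real (c i) else 0)"
  shows "(\<Sum>i<d. \<Sum>p<d. (cmod (x i p))^2) = (\<Sum>i<d. (c i)^2)"
    "cmod (\<Sum>i<d. x i i) = (\<Sum>i<d. c i)"
proof -
  show "(\<Sum>i<d. \<Sum>p<d. (cmod (x i p))^2) = (\<Sum>i<d. (c i)^2)"
  proof (rule sum.cong[OF refl])
    fix i assume i: "i \<in> {..<d}"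
    have "(\<Sum>p<d. (cmod (x i p))^2) = (\<Sum>p<d. if p = i then (c i)^2 else 0)"
      using i x c0 by (intro sum.cong) auto
    then show "(\<Sum>p<d. (cmod (x i p))^2) = (c i)^2" using i by simp
  qed
  have "(\<Sum>i<d. x i i) = of_real (\<Sum>i<d. c i)" using x by (simp add: of_real_sum)
  moreover have "0 \<le> (\<Sum>i<d. c i)" using c0 by (simp add: sum_nonneg)
  ultimately show "cmod (\<Sum>i<d. x i i) = (\<Sum>i<d. c i)" by (metis norm_of_real abs_of_nonneg)
qed


theorem theorem3p16:
  fixes d :: nat and t \<alpha> :: real
  assumes "2 \<le> d" and "0 \<le> t" and "1 \<le> \<alpha>" and "\<alpha> \<le> real d"
  defines "k \<equiv> nat \<lfloor>\<alpha>\<rfloor>"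
  defines "\<theta> \<equiv> \<alpha> - real k"
  defines "tstar \<equiv> (real k + \<theta>\<^sup>2) / (real k + \<theta>)\<^sup>2"
  shows "(in_P d \<alpha> (Phi_t d t) \<longleftrightarrow> t \<le> tstar)
    \<and> lambda_alpha d \<alpha> (choi (Phi_t d t)) = 1 - t * (real k + \<theta>)\<^sup>2 / (real k + \<theta>\<^sup>2)
    \<and> (t > tstar \<longrightarrow> (\<exists>x\<in>V_set d \<alpha>. Re (qform d (choi (Phi_t d t)) x) < 0))
    \<and> (t > tstar \<longrightarrow> real k < \<alpha> \<longrightarrow> \<alpha> < real k + 1 \<longrightarrow>
        (\<exists>x\<in>V_set d \<alpha>. Re (qform d (choi (Phi_t d t)) x) < 0 \<and>
           (\<forall>j. schmidt d x j =
              (if j < k then 1 / sqrt (real k + \<theta>\<^sup>2)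
               else if j = k then \<theta> / sqrt (real k + \<theta>\<^sup>2) else 0))))
    \<and> (t > tstar \<longrightarrow> \<alpha> = real d \<longrightarrow>
        omega d \<in> V_set d \<alpha> \<and> Re (qform d (choi (Phi_t d t)) (omega d)) < 0)"
proof -
  have fl1: "1 \<le> \<lfloor>\<alpha>\<rfloor>" using assms(3) by (simp add: one_le_floor)
  have rk: "real k = of_int \<lfloor>\<alpha>\<rfloor>" using fl1 by (simp add: k_def)
  have k1: "1 \<le> k"
  proof -
    have "nat 1 \<le> nat \<lfloor>\<alpha>\<rfloor>" using fl1 by (rule nat_mono)
    then show ?thesis by (simp add: k_def)
  qed
  have th0: "0 \<le> \<theta>" unfolding \<theta>_def rk by (simp add: of_int_floor_le)
  have th1: "\<theta> < 1" unfolding \<theta>_def rk using real_of_int_floor_add_one_gt[of \<alpha>] by linarith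
  have kd: "k \<le> d"
  proof -
    have "real k \<le> real d" using th0 assms(4) by (simp add: \<theta>_def)
    then show ?thesis by simp
  qed
  have kd2: "k < d" if "\<theta> > 0"
  proof -
    have "real k < real d" using that assms(4) by (simp add: \<theta>_def)
    then show ?thesis by simp
  qed
  define r where "r = nat \<lceil>\<alpha>\<rceil>"
  have r0: "r = k" if "\<theta> = 0"
  proof -
    have "\<alpha> = of_int (int k)" using that by (simp add: \<theta>_def)
    then have "\<lceil>\<alpha>\<rceil> = int k" by (metis ceiling_of_int)
    then show ?thesis by (simp add: r_def)
  qed
  have r1: "r = Suc k" if "\<theta> > 0"
  proof -
    have "\<lceil>\<alpha>\<rceil> = int k + 1"
      by (rule ceiling_unique) (use that th1 in \<open>simp_all add: \<theta>_def\<close>)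
    then show ?thesis by (simp add: r_def)
  qed
  have adm: "admissible d \<alpha> x \<longleftrightarrow> Defs.unit_vec d x \<and> (\<forall>j. r \<le> j \<longrightarrow> schmidt d x j = 0) \<and>
      (\<theta> > 0 \<longrightarrow> schmidt d x k \<le> \<theta> / real k * (\<Sum>j<k. schmidt d x j))" for x
    unfolding admissible_def Let_def k_def[symmetric] \<theta>_def[symmetric] r_def[symmetric] ..
  define M where "M = (real k + \<theta>)\<^sup>2 / (real k + \<theta>\<^sup>2)"
  define L where "L = 1 - t * M"
  have kpos: "0 < real k" using k1 by simp
  have pos1: "0 < real k + \<theta>\<^sup>2" using kpos by (simp add: add_pos_nonneg)
  have pos2: "0 < real k + \<theta>" using kpos th0 by simp
  have lower: "L \<le> Re (qform d (choi (Phi_t d t)) x)" if xV: "x \<in> V_set d \<alpha>" for x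
  proof -
    have ax: "Defs.unit_vec d x" "\<forall>j. r \<le> j \<longrightarrow> schmidt d x j = 0"
      "\<theta> > 0 \<longrightarrow> schmidt d x k \<le> \<theta> / real k * (\<Sum>j<k. schmidt d x j)"
      using xV adm unfolding V_set_def by auto
    define s where "s = schmidt d x"
    have sv: "is_singular_values d x s" unfolding s_def by (rule schmidt_sv)
    have n1: "(\<Sum>i<d. \<Sum>p<d. (cmod (x i p))^2) = 1" using ax(1) by (simp add: Defs.unit_vec_def)
    have ns: "(\<Sum>m<d. (s m)^2) = 1" using sv_frob[OF sv] n1 by simp
    have zero: "\<forall>j. Suc k \<le> j \<longrightarrow> s j = 0"
    proof (intro allI impI)
      fix j assume j: "Suc k \<le> j"
      have "r \<le> Suc k" using r0 r1 th0 by (cases "\<theta> = 0") auto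
      then show "s j = 0" using ax(2) j by (simp add: s_def)
    qed
    have zero0: "\<theta> = 0 \<longrightarrow> s k = 0" using ax(2) r0 by (simp add: s_def)
    have ob: "(\<Sum>m<d. s m)^2 \<le> M" unfolding M_def
      by (rule opt_bound[OF k1 kd th0 th1 svD(2)[OF sv] ns zero zero0]) (use ax(3) in \<open>simp add: s_def\<close>)
    have tr: "cmod (\<Sum>i<d. x i i) \<le> (\<Sum>m<d. s m)" by (rule sv_trace[OF sv])
    have "(cmod (\<Sum>i<d. x i i))^2 \<le> (\<Sum>m<d. s m)^2" by (rule power_mono[OF tr]) simp
    then have "(cmod (\<Sum>i<d. x i i))^2 \<le> M" using ob by linarith
    then have "t * (cmod (\<Sum>i<d. x i i))^2 \<le> t * M" using assms(2) by (rule mult_left_mono)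
    then show ?thesis unfolding Re_qform_Phi n1 L_def by linarith
  qed
  define c where "c j = (if j < k then 1 / sqrt (real k + \<theta>\<^sup>2)
               else if j = k then \<theta> / sqrt (real k + \<theta>\<^sup>2) else 0)" for j
  have sq: "0 < sqrt (real k + \<theta>\<^sup>2)" using pos1 by simp
  have c0: "\<forall>j. 0 \<le> c j" using th0 sq by (simp add: c_def)
  have cz: "\<forall>j. Suc k \<le> j \<longrightarrow> c j = 0" by (simp add: c_def)
  have cd: "\<forall>j. d \<le> j \<longrightarrow> c j = 0"
  proof (intro allI impI)
    fix j assume j: "d \<le> j"
    show "c j = 0"
    proof (cases "j = k")
      case True
      then have "\<not> \<theta> > 0" using kd2 j by fastforce
      then have "\<theta> = 0" using th0 by simp
      then show ?thesis using True by (simp add: c_def)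
    qed (use j kd in \<open>simp add: c_def\<close>)
  qed
  have cmono: "\<forall>i j. i \<le> j \<longrightarrow> j < d \<longrightarrow> c j \<le> c i"
  proof (intro allI impI)
    fix i j :: nat assume ij: "i \<le> j" "j < d"
    have a: "\<theta> / sqrt (real k + \<theta>\<^sup>2) \<le> 1 / sqrt (real k + \<theta>\<^sup>2)"
      using th1 sq by (simp add: divide_right_mono)
    have b: "0 \<le> \<theta> / sqrt (real k + \<theta>\<^sup>2)" using th0 sq by simp
    show "c j \<le> c i" using ij a b sq by (auto simp: c_def)
  qed
  have ck: "(if k < d then c k else 0) = \<theta> / sqrt (real k + \<theta>\<^sup>2)"
  proof (cases "k < d")
    case False
    then have "\<theta> = 0" using kd2 th0 by fastforce
    then show ?thesis using False by simp
  qed (simp add: c_def)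
  have ck2: "(if k < d then (c k)^2 else 0) = \<theta>\<^sup>2 / (real k + \<theta>\<^sup>2)"
  proof (cases "k < d")
    case False
    then have "\<theta> = 0" using kd2 th0 by fastforce
    then show ?thesis using False by simp
  next
    case True
    then show ?thesis using pos1 by (simp add: c_def power_divide)
  qed
  have sumc: "(\<Sum>i<d. c i) = (real k + \<theta>) / sqrt (real k + \<theta>\<^sup>2)"
  proof -
    have "(\<Sum>i<d. c i) = (\<Sum>m<k. c m) + (if k < d then c k else 0)"
      by (rule sum_split_k[OF kd cz])
    also have "(\<Sum>m<k. c m) = real k / sqrt (real k + \<theta>\<^sup>2)"
      by (simp add: c_def)
    finally show ?thesis unfolding ck by (simp add: add_divide_distrib)
  qed
  have sumc2: "(\<Sum>i<d. (c i)^2) = 1"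
  proof -
    have "(\<Sum>i<d. (c i)^2) = (\<Sum>m<k. (c m)^2) + (if k < d then (c k)^2 else 0)"
      by (rule sum_split_k[OF kd]) (use cz in simp)
    also have "(\<Sum>m<k. (c m)^2) = real k / (real k + \<theta>\<^sup>2)"
      using pos1 by (simp add: c_def power_divide)
    finally show ?thesis unfolding ck2 using pos1 by (simp add: add_divide_distrib[symmetric])
  qed
  have diag: "x \<in> V_set d \<alpha> \<and> Re (qform d (choi (Phi_t d t)) x) = L \<and> schmidt d x = c"
    if x: "\<forall>i<d. \<forall>p<d. x i p = (if i = p then complex_of_real (c i) else 0)" for x
  proof -
    note ds = diag_sums[OF c0 x]
    have sch: "schmidt d x = c" by (rule schmidt_diag[OF c0 cd cmono x])
    have u: "Defs.unit_vec d x" unfolding Defs.unit_vec_def ds(1) sumc2 ..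
    have z: "\<forall>j. r \<le> j \<longrightarrow> schmidt d x j = 0"
    proof (intro allI impI)
      fix j assume j: "r \<le> j"
      show "schmidt d x j = 0"
      proof (cases "\<theta> > 0")
        case True
        then show ?thesis using j r1 cz sch by simp
      next
        case False
        then have "\<theta> = 0" using th0 by simp
        then show ?thesis using j r0 sch by (auto simp: c_def)
      qed
    qed
    have ineq: "\<theta> > 0 \<longrightarrow> schmidt d x k \<le> \<theta> / real k * (\<Sum>j<k. schmidt d x j)"
      using kpos by (simp add: sch c_def)
    have "x \<in> V_set d \<alpha>" unfolding V_set_def using adm u z ineq by simp
    moreover have "Re (qform d (choi (Phi_t d t)) x) = L"
    proof -
      have "Re (qform d (choi (Phi_t d t)) x) = 1 - t * ((real k + \<theta>) / sqrt (real k + \<theta>\<^sup>2))^2"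
        unfolding Re_qform_Phi ds sumc2 sumc ..
      also have "\<dots> = L" using pos1 by (simp add: L_def M_def power_divide)
      finally show ?thesis .
    qed
    ultimately show ?thesis using sch by simp
  qed
  define x0 where "x0 = (\<lambda>i p. if i = p then complex_of_real (c i) else 0)"
  have x0: "x0 \<in> V_set d \<alpha>" "Re (qform d (choi (Phi_t d t)) x0) = L" "schmidt d x0 = c"
    using diag[of x0] by (auto simp: x0_def)
  have lam: "lambda_alpha d \<alpha> (choi (Phi_t d t)) = L"
    unfolding lambda_alpha_def
    by (rule cInf_eq_minimum) (use x0 lower in auto)
  have tstar_iff: "t \<le> tstar \<longleftrightarrow> 0 \<le> L"
  proof -
    have "t \<le> tstar \<longleftrightarrow> t * (real k + \<theta>)\<^sup>2 \<le> real k + \<theta>\<^sup>2"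
      using pos2 by (simp add: tstar_def pos_le_divide_eq)
    also have "\<dots> \<longleftrightarrow> t * M \<le> 1"
      using pos1 by (simp add: M_def pos_divide_le_eq mult.assoc[symmetric] times_divide_eq_right)
    finally show ?thesis by (simp add: L_def)
  qed
  have herm: "hermitian_preserving d (Phi_t d t)"
    unfolding hermitian_preserving_def hermitian_mat_def
  proof (intro allI impI)
    fix X :: cmat and i j :: nat
    assume h: "\<forall>i<d. \<forall>j<d. X j i = cnj (X i j)" and ij: "i < d" "j < d"
    have "cnj (mtrace d X) = mtrace d X"
      unfolding mtrace_def cnj_sum
    proof (rule sum.cong[OF refl])
      fix m assume "m \<in> {..<d}"
      then have "X m m = cnj (X m m)" using h by blast
      then show "cnj (X m m) = X m m" by simp
    qed
    moreover have "X j i = cnj (X i j)" using h ij by blast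
    ultimately show "Phi_t d t X j i = cnj (Phi_t d t X i j)"
      by (simp add: Phi_t_def)
  qed
  have neg: "t > tstar \<Longrightarrow> L < 0" using tstar_iff by linarith
  have P1: "in_P d \<alpha> (Phi_t d t) \<longleftrightarrow> t \<le> tstar"
  proof
    assume "in_P d \<alpha> (Phi_t d t)"
    then have "0 \<le> Re (qform d (choi (Phi_t d t)) x0)" using x0(1) by (simp add: in_P_def)
    then show "t \<le> tstar" using x0(2) tstar_iff by simp
  next
    assume "t \<le> tstar"
    then have "0 \<le> L" using tstar_iff by simp
    then show "in_P d \<alpha> (Phi_t d t)" unfolding in_P_def using herm lower by force
  qed
  have P4: "t > tstar \<longrightarrow> real k < \<alpha> \<longrightarrow> \<alpha> < real k + 1 \<longrightarrow>
        (\<exists>x\<in>V_set d \<alpha>. Re (qform d (choi (Phi_t d t)) x) < 0 \<and>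
           (\<forall>j. schmidt d x j =
              (if j < k then 1 / sqrt (real k + \<theta>\<^sup>2)
               else if j = k then \<theta> / sqrt (real k + \<theta>\<^sup>2) else 0)))"
  proof (intro impI)
    assume tt: "t > tstar"
    have "\<forall>j. schmidt d x0 j = (if j < k then 1 / sqrt (real k + \<theta>\<^sup>2)
               else if j = k then \<theta> / sqrt (real k + \<theta>\<^sup>2) else 0)"
      unfolding x0(3) by (simp add: c_def)
    moreover have "Re (qform d (choi (Phi_t d t)) x0) < 0" using x0(2) neg[OF tt] by simp
    ultimately show "\<exists>x\<in>V_set d \<alpha>. Re (qform d (choi (Phi_t d t)) x) < 0 \<and>
           (\<forall>j. schmidt d x j =
              (if j < k then 1 / sqrt (real k + \<theta>\<^sup>2)
               else if j = k then \<theta> / sqrt (real k + \<theta>\<^sup>2) else 0))"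
      using x0(1) by blast
  qed
  have P5: "t > tstar \<longrightarrow> \<alpha> = real d \<longrightarrow>
        omega d \<in> V_set d \<alpha> \<and> Re (qform d (choi (Phi_t d t)) (omega d)) < 0"
  proof (intro impI)
    assume tt: "t > tstar" and ad: "\<alpha> = real d"
    have "k = d" using ad by (simp add: k_def)
    then have th00: "\<theta> = 0" using ad by (simp add: \<theta>_def)
    have "\<forall>i<d. \<forall>p<d. omega d i p = (if i = p then complex_of_real (c i) else 0)"
      using \<open>k = d\<close> th00 by (simp add: omega_def c_def)
    then have "omega d \<in> V_set d \<alpha> \<and> Re (qform d (choi (Phi_t d t)) (omega d)) = L"
      using diag by blast
    then show "omega d \<in> V_set d \<alpha> \<and> Re (qform d (choi (Phi_t d t)) (omega d)) < 0"
      using neg[OF tt] by simp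
  qed
  have P3: "t > tstar \<longrightarrow> (\<exists>x\<in>V_set d \<alpha>. Re (qform d (choi (Phi_t d t)) x) < 0)"
    using x0(1) x0(2) neg by auto
  have lam': "lambda_alpha d \<alpha> (choi (Phi_t d t)) = 1 - t * (real k + \<theta>)\<^sup>2 / (real k + \<theta>\<^sup>2)"
    using lam by (simp add: L_def M_def)
  show ?thesis by (intro conjI P1 lam' P3 P4 P5)
qed

end
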